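(* Let $M\ge1$, $\beta>0$, $h\in\mathbb{R}$ with either $h\neq0$ or $\beta\le1$, and $\boldsymbol{\epsilon}\in\{-1,1\}^M$. Let $K\subset\mathbb{R}^M$ be compact and $F:K\times\{-1,1\}^M\to\mathbb{R}$ bounded. Then, as $N\to\infty$, $$\sup_{\mathbf{p}\in K}\Big|\frac1N\sum_{i=1}^N F(\mathbf{p},\mathbf{s}_i)-\langle F(\mathbf{p},\mathbf{s})\rangle_{\mathbf{s},\boldsymbol{\epsilon}}\Big|\longrightarrow0$$ in probability under $\mathcal{S}\sim P^{CW}_{\beta,h\boldsymbol{\epsilon}}$, i.e. for every $\varepsilon>0$ the $P^{CW}_{\beta,h\boldsymbol{\epsilon}}$-probability that this supremum exceeds $\varepsilon$ tends to $0$.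
   Context: $\mathbf{s}_i:=(s^1_i,\dots,s^M_i)$ for $\mathcal{S}=(\mathbf{s}^1,\dots,\mathbf{s}^M)$, $\mathbf{s}^\mu\in\{-1,1\}^N$. $P^{CW}_{\beta,\mathbf{h}}(\mathcal{S})=\prod_{\mu=1}^M z_{\beta,h^\mu}^{-1}\exp\big(\frac{\beta}{N}\sum_{i<j}s^\mu_is^\mu_j+h^\mu\sum_is^\mu_i\big)$. $\langle\cdot\rangle_{\mathbf{s},\boldsymbol{\epsilon}}$ is expectation over $\mathbf{s}\in\{-1,1\}^M$ with independent entries of means $m_0(\beta,\epsilon^\mu h)$, where $m_0(\beta,h):=\operatorname{argmax}_{x}[\log2+\log\cosh(\beta x+h)-\beta x^2/2]$. *)

theory Defs
  imports "HOL-Analysis.Analysis"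
begin

definition spin_configs :: "nat \<Rightarrow> (nat \<Rightarrow> real) set" where
  "spin_configs N = {s. (\<forall>i<N. s i \<in> {-1, 1}) \<and> (\<forall>i\<ge>N. s i = 0)}"

definition cw_weight :: "real \<Rightarrow> real \<Rightarrow> nat \<Rightarrow> (nat \<Rightarrow> real) \<Rightarrow> real" where
  "cw_weight \<beta> h N s =
     exp (\<beta> / real N * (\<Sum>i<N. \<Sum>j<N. if i < j then s i * s j else 0) + h * (\<Sum>i<N. s i))"

definition cw_Z :: "real \<Rightarrow> real \<Rightarrow> nat \<Rightarrow> real" where
  "cw_Z \<beta> h N = (\<Sum>s\<in>spin_configs N. cw_weight \<beta> h N s)"

text \<open>Configurations S = (s^1,...,s^M) of M copies, indexed by the finite type 'm (M = CARD('m)).\<close>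
definition multi_configs :: "nat \<Rightarrow> ('m \<Rightarrow> nat \<Rightarrow> real) set" where
  "multi_configs N = {S. \<forall>\<mu>. S \<mu> \<in> spin_configs N}"

definition cw_prob :: "real \<Rightarrow> ('m \<Rightarrow> real) \<Rightarrow> nat \<Rightarrow> ('m \<Rightarrow> nat \<Rightarrow> real) \<Rightarrow> real" where
  "cw_prob \<beta> hv N S = (\<Prod>\<mu>\<in>UNIV. cw_weight \<beta> (hv \<mu>) N (S \<mu>) / cw_Z \<beta> (hv \<mu>) N)"

definition m0 :: "real \<Rightarrow> real \<Rightarrow> real" where
  "m0 \<beta> h = (THE x. \<forall>y. ln 2 + ln (cosh (\<beta> * y + h)) - \<beta> * y\<^sup>2 / 2
                         \<le> ln 2 + ln (cosh (\<beta> * x + h)) - \<beta> * x\<^sup>2 / 2)"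

definition pm_vectors :: "('m \<Rightarrow> real) set" where
  "pm_vectors = {s. \<forall>\<mu>. s \<mu> \<in> {-1, 1}}"

text \<open>< G(s) >_{s,eps}: expectation over s in {-1,1}^M with independent entries
  of means m_0(beta, eps^mu h).\<close>
definition avg_s :: "real \<Rightarrow> real \<Rightarrow> ('m \<Rightarrow> real) \<Rightarrow> (('m \<Rightarrow> real) \<Rightarrow> real) \<Rightarrow> real" where
  "avg_s \<beta> h \<epsilon> G =
     (\<Sum>s\<in>pm_vectors. (\<Prod>\<mu>\<in>UNIV. (1 + s \<mu> * m0 \<beta> (\<epsilon> \<mu> * h)) / 2) * G s)"

end

theory Submission
  imports Defs "HOL-Combinatorics.Permutations"
begin

definition sig :: "nat \<Rightarrow> nat set \<Rightarrow> nat \<Rightarrow> real" where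
  "sig N A = (\<lambda>i. if i < N then (if i \<in> A then 1 else -1) else 0)"

lemma sig_in: "sig N A \<in> spin_configs N"
  by (auto simp: sig_def spin_configs_def)

lemma spin_configs_eq: "spin_configs N = sig N ` Pow {..<N}"
proof (intro equalityI subsetI)
  fix s assume s: "s \<in> spin_configs N"
  let ?A = "{i. i < N \<and> s i = 1}"
  have "s = sig N ?A"
  proof
    fix i show "s i = sig N ?A i" using s by (auto simp: sig_def spin_configs_def)
  qed
  then show "s \<in> sig N ` Pow {..<N}" by auto
qed (auto simp: sig_in)

lemma inj_sig: "inj_on (sig N) (Pow {..<N})"
proof (rule inj_onI)
  fix A B assume A: "A \<in> Pow {..<N}" and B: "B \<in> Pow {..<N}" and e: "sig N A = sig N B"
  show "A = B"
  proof (intro equalityI subsetI)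
    fix x assume "x \<in> A" then show "x \<in> B" using A fun_cong[OF e, of x] by (auto simp: sig_def split: if_splits)
  next
    fix x assume "x \<in> B" then show "x \<in> A" using B fun_cong[OF e, of x] by (auto simp: sig_def split: if_splits)
  qed
qed

lemma bij_sig: "bij_betw (sig N) (Pow {..<N}) (spin_configs N)"
  using inj_sig spin_configs_eq by (simp add: bij_betw_def)

lemma finite_spin [simp]: "finite (spin_configs N)"
  by (simp add: spin_configs_eq)

lemma spin_nonempty: "spin_configs N \<noteq> {}"
  using sig_in by blast

lemma sum_sig: assumes "A \<subseteq> {..<N}" shows "(\<Sum>i<N. sig N A i) = 2 * real (card A) - real N"
proof -
  have fA: "finite A" using assms finite_subset by blast
  have "(\<Sum>i<N. sig N A i) = (\<Sum>i<N. (if i \<in> A then 2 else 0) - 1)"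
    by (rule sum.cong) (auto simp: sig_def)
  also have "\<dots> = (\<Sum>i<N. (if i \<in> A then 2 else 0)) - real N"
    by (simp add: sum_subtractf)
  also have "(\<Sum>i<N. (if i \<in> A then 2 else 0::real)) = 2 * real (card A)"
    using assms by (simp add: sum.If_cases Int_absorb1)
  finally show ?thesis .
qed

lemma spin_sq: "s \<in> spin_configs N \<Longrightarrow> i < N \<Longrightarrow> s i * s i = 1"
  by (auto simp: spin_configs_def)

lemma pair_sum:
  assumes s: "s \<in> spin_configs N"
  shows "(\<Sum>i<N. \<Sum>j<N. if i < j then s i * s j else 0) = ((\<Sum>i<N. s i)^2 - real N) / 2"
proof -
  let ?U = "\<lambda>i j. if i < j then s i * s j else 0"
  let ?L = "\<lambda>i j. if j < i then s i * s j else 0"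
  let ?D = "\<lambda>i j. if i = j then s i * s j else 0"
  have "(\<Sum>i<N. s i)^2 = (\<Sum>i<N. \<Sum>j<N. s i * s j)"
    by (simp add: power2_eq_square sum_product)
  also have "\<dots> = (\<Sum>i<N. \<Sum>j<N. ?U i j + ?L i j + ?D i j)"
    by (intro sum.cong refl) auto
  also have "\<dots> = (\<Sum>i<N. \<Sum>j<N. ?U i j) + (\<Sum>i<N. \<Sum>j<N. ?L i j) + (\<Sum>i<N. \<Sum>j<N. ?D i j)"
    by (simp add: sum.distrib)
  also have "(\<Sum>i<N. \<Sum>j<N. ?L i j) = (\<Sum>j<N. \<Sum>i<N. ?L i j)"
    by (rule sum.swap)
  also have "\<dots> = (\<Sum>i<N. \<Sum>j<N. ?U i j)"
    by (intro sum.cong refl) (auto simp: mult.commute)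
  also have "(\<Sum>i<N. \<Sum>j<N. ?D i j) = real N"
    using spin_sq[OF s] by simp
  finally show ?thesis by simp
qed

definition W :: "real \<Rightarrow> real \<Rightarrow> nat \<Rightarrow> real \<Rightarrow> real" where
  "W \<beta> h N k = exp (\<beta> / real N * ((k^2 - real N) / 2) + h * k)"

lemma weight_eq: "s \<in> spin_configs N \<Longrightarrow> cw_weight \<beta> h N s = W \<beta> h N (\<Sum>i<N. s i)"
  by (simp add: cw_weight_def W_def pair_sum)

lemma group_sum:
  "(\<Sum>s\<in>spin_configs N. g (\<Sum>i<N. s i)) = (\<Sum>j\<le>N. real (N choose j) * g (2 * real j - real N))"
proof -
  have "(\<Sum>s\<in>spin_configs N. g (\<Sum>i<N. s i)) = (\<Sum>A\<in>Pow {..<N}. g (\<Sum>i<N. sig N A i))"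
    using sum.reindex_bij_betw[OF bij_sig, of "\<lambda>s. g (\<Sum>i<N. s i)"] by simp
  also have "\<dots> = (\<Sum>A\<in>Pow {..<N}. g (2 * real (card A) - real N))"
    by (intro sum.cong refl) (simp add: sum_sig)
  also have "\<dots> = (\<Sum>j\<le>N. \<Sum>A\<in>{A. A \<in> Pow {..<N} \<and> card A = j}. g (2 * real (card A) - real N))"
    by (rule sum.group[symmetric]) (auto simp: card_mono[of "{..<N}", simplified])
  also have "\<dots> = (\<Sum>j\<le>N. real (N choose j) * g (2 * real j - real N))"
  proof (intro sum.cong refl)
    fix j
    have "card {A. A \<in> Pow {..<N} \<and> card A = j} = N choose j"
      using n_subsets[of "{..<N}" j] by simp
    then show "(\<Sum>A\<in>{A. A \<in> Pow {..<N} \<and> card A = j}. g (2 * real (card A) - real N)) = real (N choose j) * g (2 * real j - real N)"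
      by simp
  qed
  finally show ?thesis .
qed

definition EE :: "real \<Rightarrow> real \<Rightarrow> nat \<Rightarrow> ((nat \<Rightarrow> real) \<Rightarrow> real) \<Rightarrow> real" where
  "EE \<beta> h N f = (\<Sum>s\<in>spin_configs N. cw_weight \<beta> h N s * f s) / cw_Z \<beta> h N"

lemma weight_pos: "cw_weight \<beta> h N s > 0"
  by (simp add: cw_weight_def)

lemma Z_pos: "cw_Z \<beta> h N > 0"
  unfolding cw_Z_def using spin_nonempty by (intro sum_pos) (auto simp: weight_pos)

lemma EE_const: "EE \<beta> h N (\<lambda>s. c) = c"
  using Z_pos[of \<beta> h N] by (simp add: EE_def cw_Z_def sum_distrib_right[symmetric])

lemma EE_add: "EE \<beta> h N (\<lambda>s. f s + g s) = EE \<beta> h N f + EE \<beta> h N g"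
  by (simp add: EE_def distrib_left sum.distrib add_divide_distrib)

lemma EE_diff: "EE \<beta> h N (\<lambda>s. f s - g s) = EE \<beta> h N f - EE \<beta> h N g"
  by (simp add: EE_def right_diff_distrib sum_subtractf diff_divide_distrib)

lemma EE_cmult: "EE \<beta> h N (\<lambda>s. c * f s) = c * EE \<beta> h N f"
  by (simp add: EE_def sum_distrib_left mult.left_commute)

lemma EE_sum: "finite I \<Longrightarrow> EE \<beta> h N (\<lambda>s. \<Sum>i\<in>I. f i s) = (\<Sum>i\<in>I. EE \<beta> h N (f i))"
  by (induction I rule: finite_induct) (simp_all add: EE_const EE_add)

lemma EE_mono: "(\<And>s. s \<in> spin_configs N \<Longrightarrow> f s \<le> g s) \<Longrightarrow> EE \<beta> h N f \<le> EE \<beta> h N g"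
  unfolding EE_def using Z_pos[of \<beta> h N]
  by (intro divide_right_mono sum_mono mult_left_mono) (auto simp: weight_pos less_imp_le)

lemma EE_abs: "\<bar>EE \<beta> h N f\<bar> \<le> EE \<beta> h N (\<lambda>s. \<bar>f s\<bar>)"
proof -
  have "EE \<beta> h N f \<le> EE \<beta> h N (\<lambda>s. \<bar>f s\<bar>)" by (rule EE_mono) auto
  moreover have "- EE \<beta> h N f \<le> EE \<beta> h N (\<lambda>s. \<bar>f s\<bar>)"
    using EE_mono[of N "\<lambda>s. - f s" "\<lambda>s. \<bar>f s\<bar>" \<beta> h] EE_cmult[of \<beta> h N "-1" f] by auto
  ultimately show ?thesis by linarith
qed

lemma perm_spin:
  assumes p: "p permutes {..<N}" and s: "s \<in> spin_configs N"
  shows "s \<circ> p \<in> spin_configs N"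
  using s permutes_in_image[OF p] permutes_not_in[OF p]
  unfolding spin_configs_def by auto

lemma bij_perm_spin:
  assumes p: "p permutes {..<N}"
  shows "bij_betw (\<lambda>s. s \<circ> p) (spin_configs N) (spin_configs N)"
proof -
  have ip: "inv p permutes {..<N}" using p by (rule permutes_inv)
  show ?thesis
  proof (rule bij_betw_byWitness[where f' = "\<lambda>s. s \<circ> inv p"])
    show "\<forall>a\<in>spin_configs N. a \<circ> p \<circ> inv p = a"
      using permutes_inv_o(1)[OF p] by (simp add: o_assoc[symmetric])
    show "\<forall>a'\<in>spin_configs N. a' \<circ> inv p \<circ> p = a'"
      using permutes_inv_o(2)[OF p] by (simp add: o_assoc[symmetric])
    show "(\<lambda>s. s \<circ> p) ` spin_configs N \<subseteq> spin_configs N" using perm_spin[OF p] by auto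
    show "(\<lambda>s. s \<circ> inv p) ` spin_configs N \<subseteq> spin_configs N" using perm_spin[OF ip] by auto
  qed
qed

lemma weight_perm:
  assumes p: "p permutes {..<N}" and s: "s \<in> spin_configs N"
  shows "cw_weight \<beta> h N (s \<circ> p) = cw_weight \<beta> h N s"
proof -
  have "(\<Sum>i<N. (s \<circ> p) i) = (\<Sum>i<N. s i)"
    using sum.permute[OF p, of s] by simp
  then show ?thesis using weight_eq[OF s] weight_eq[OF perm_spin[OF p s]] by simp
qed

lemma EE_perm:
  assumes p: "p permutes {..<N}"
  shows "EE \<beta> h N (\<lambda>s. f (s \<circ> p)) = EE \<beta> h N f"
proof -
  have "(\<Sum>s\<in>spin_configs N. cw_weight \<beta> h N s * f s)
      = (\<Sum>s\<in>spin_configs N. cw_weight \<beta> h N (s \<circ> p) * f (s \<circ> p))"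
    using sum.reindex_bij_betw[OF bij_perm_spin[OF p], of "\<lambda>s. cw_weight \<beta> h N s * f s"] by simp
  also have "\<dots> = (\<Sum>s\<in>spin_configs N. cw_weight \<beta> h N s * f (s \<circ> p))"
    by (intro sum.cong refl) (simp add: weight_perm[OF p])
  finally show ?thesis by (simp add: EE_def)
qed

lemma EE_site:
  assumes "i < N"
  shows "EE \<beta> h N (\<lambda>s. s i) = EE \<beta> h N (\<lambda>s. s 0)"
proof -
  have p: "Transposition.transpose 0 i permutes {..<N}" using assms by (intro permutes_swap_id) auto
  show ?thesis using EE_perm[OF p, of \<beta> h "\<lambda>s. s 0"] by simp
qed

lemma EE_pair:
  assumes "i < N" "j < N" "i \<noteq> j"
  shows "EE \<beta> h N (\<lambda>s. s i * s j) = EE \<beta> h N (\<lambda>s. s 0 * s 1)"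
proof -
  let ?a = "Transposition.transpose 0 i" let ?b = "Transposition.transpose 1 (Transposition.transpose 0 i j)"
  have N1: "1 < N" using assms by auto
  have pa: "?a permutes {..<N}" using assms by (intro permutes_swap_id) auto
  have "Transposition.transpose 0 i j < N" using assms by (auto simp: Transposition.transpose_def)
  then have pb: "?b permutes {..<N}" using N1 by (intro permutes_swap_id) auto
  have p: "?a \<circ> ?b permutes {..<N}" by (rule permutes_compose[OF pb pa])
  have e0: "(?a \<circ> ?b) 0 = i" using assms by (auto simp: Transposition.transpose_def)
  have e1: "(?a \<circ> ?b) 1 = j" using assms by (auto simp: Transposition.transpose_def)
  show ?thesis using EE_perm[OF p, of \<beta> h "\<lambda>s. s 0 * s 1"] e0 e1 by (simp add: o_def)
qed

definition mag :: "nat \<Rightarrow> (nat \<Rightarrow> real) \<Rightarrow> real" where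
  "mag N s = (\<Sum>i<N. s i) / real N"

lemma EE_mag: "N > 0 \<Longrightarrow> EE \<beta> h N (mag N) = EE \<beta> h N (\<lambda>s. s 0)"
proof -
  assume N: "N > 0"
  have "mag N = (\<lambda>s. (1 / real N) * (\<Sum>i<N. s i))"
    by (auto simp: mag_def fun_eq_iff)
  then have "EE \<beta> h N (mag N) = EE \<beta> h N (\<lambda>s. (1 / real N) * (\<Sum>i<N. s i))"
    by (simp only:)
  also have "\<dots> = (1 / real N) * (\<Sum>i<N. EE \<beta> h N (\<lambda>s. s i))"
    by (subst EE_cmult) (simp add: EE_sum)
  also have "\<dots> = (1 / real N) * (\<Sum>i<N. EE \<beta> h N (\<lambda>s. s 0))"
    by (intro arg_cong[where f="\<lambda>x. (1 / real N) * x"] sum.cong refl) (auto intro: EE_site)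
  finally show ?thesis using N by simp
qed

lemma EE_mag2:
  assumes N: "N > 0"
  shows "EE \<beta> h N (\<lambda>s. (mag N s)^2) = 1 / real N + (real N - 1) / real N * EE \<beta> h N (\<lambda>s. s 0 * s 1)"
proof -
  have "EE \<beta> h N (\<lambda>s. (mag N s)^2) = EE \<beta> h N (\<lambda>s. (1 / real N^2) * (\<Sum>i<N. \<Sum>j<N. s i * s j))"
    by (intro arg_cong[where f="EE \<beta> h N"] ext) (simp add: mag_def power2_eq_square sum_product power_divide)
  also have "\<dots> = (1 / real N^2) * (\<Sum>i<N. \<Sum>j<N. EE \<beta> h N (\<lambda>s. s i * s j))"
    by (subst EE_cmult) (simp add: EE_sum)
  also have "\<dots> = (1 / real N^2) * (\<Sum>i<N. \<Sum>j<N. if i = j then 1 else EE \<beta> h N (\<lambda>s. s 0 * s 1))"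
  proof -
    have "EE \<beta> h N (\<lambda>s. s i * s j) = (if i = j then 1 else EE \<beta> h N (\<lambda>s. s 0 * s 1))"
      if "i < N" "j < N" for i j
    proof (cases "i = j")
      case True
      have "EE \<beta> h N (\<lambda>s. s i * s i) = EE \<beta> h N (\<lambda>s. 1)"
        unfolding EE_def by (intro arg_cong2[where f="(/)"] sum.cong refl) (simp add: spin_sq that)
      then show ?thesis using True by (simp add: EE_const)
    qed (use EE_pair[OF that] in simp)
    then show ?thesis by simp
  qed
  also have "(\<Sum>i<N. \<Sum>j<N. if i = j then 1 else EE \<beta> h N (\<lambda>s. s 0 * s 1))
      = (\<Sum>i<N. 1 + (real N - 1) * EE \<beta> h N (\<lambda>s. s 0 * s 1))"
  proof (intro sum.cong refl)
    fix i assume i: "i \<in> {..<N}"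
    have "(\<Sum>j<N. if i = j then 1 else EE \<beta> h N (\<lambda>s. s 0 * s 1))
        = (\<Sum>j\<in>{..<N}. (if j = i then 1 - EE \<beta> h N (\<lambda>s. s 0 * s 1) else 0) + EE \<beta> h N (\<lambda>s. s 0 * s 1))"
      by (intro sum.cong refl) auto
    also have "\<dots> = 1 - EE \<beta> h N (\<lambda>s. s 0 * s 1) + real N * EE \<beta> h N (\<lambda>s. s 0 * s 1)"
      using i by (simp add: sum.distrib)
    finally show "(\<Sum>j<N. if i = j then 1 else EE \<beta> h N (\<lambda>s. s 0 * s 1)) = 1 + (real N - 1) * EE \<beta> h N (\<lambda>s. s 0 * s 1)"
      by (simp add: algebra_simps)
  qed
  finally have "EE \<beta> h N (\<lambda>s. (mag N s)^2) = 1 / real N ^ 2 * (real N * (1 + (real N - 1) * EE \<beta> h N (\<lambda>s. s 0 * s 1)))"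
    by simp
  also have "\<dots> = 1 / real N + (real N - 1) / real N * EE \<beta> h N (\<lambda>s. s 0 * s 1)"
  proof -
    have "real N > 0" using N by simp
    then have "1 / real N ^ 2 * (real N * X) = X / real N" for X :: real
      by (simp add: power2_eq_square)
    then show ?thesis by (simp add: add_divide_distrib)
  qed
  finally show ?thesis .
qed

definition TT :: "real \<Rightarrow> real \<Rightarrow> real \<Rightarrow> real" where
  "TT \<beta> h y = tanh (\<beta> * y + h) - y"

definition phi :: "real \<Rightarrow> real \<Rightarrow> real \<Rightarrow> real" where
  "phi \<beta> h x = ln 2 + ln (cosh (\<beta> * x + h)) - \<beta> * x\<^sup>2 / 2"

lemma TT_deriv: "(TT \<beta> h has_real_derivative (\<beta> * (1 - tanh (\<beta> * y + h)^2) - 1)) (at y)"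
  unfolding TT_def by (auto intro!: derivative_eq_intros)

lemma TT_cont: "continuous_on A (TT \<beta> h)"
  unfolding TT_def by (intro continuous_intros) auto

lemma phi_deriv: "(phi \<beta> h has_real_derivative (\<beta> * TT \<beta> h x)) (at x)"
  unfolding phi_def TT_def
  by (auto intro!: derivative_eq_intros simp: tanh_def algebra_simps power2_eq_square)

lemma phi_cont: "continuous_on A (phi \<beta> h)"
  unfolding phi_def by (intro continuous_intros) auto

lemma TT_concave:
  assumes b: "\<beta> > 0" and h: "h \<ge> 0"
    and t: "0 \<le> t" "t \<le> 1" and xy: "0 \<le> x" "0 \<le> y"
  shows "(1 - t) * TT \<beta> h x + t * TT \<beta> h y \<le> TT \<beta> h ((1 - t) * x + t * y)"
proof -
  have "convex_on {0..} (\<lambda>y. - TT \<beta> h y)"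
  proof (rule convex_on_realI[where f' = "\<lambda>y. - (\<beta> * (1 - tanh (\<beta> * y + h)^2) - 1)"])
    show "connected {0::real..}" by simp
    show "((\<lambda>y. - TT \<beta> h y) has_real_derivative (- (\<beta> * (1 - tanh (\<beta> * y + h)^2) - 1))) (at y)" for y
      using TT_deriv[of \<beta> h y] by (auto intro!: derivative_eq_intros)
    fix u v :: real assume u: "u \<in> {0..}" and v: "v \<in> {0..}" and uv: "u \<le> v"
    have "0 \<le> tanh (\<beta> * u + h)" using u b h by simp
    moreover have "tanh (\<beta> * u + h) \<le> tanh (\<beta> * v + h)" using uv b by (simp add: mult_left_mono)
    ultimately have "tanh (\<beta> * u + h)^2 \<le> tanh (\<beta> * v + h)^2" by (simp add: power_mono)
    then show "- (\<beta> * (1 - tanh (\<beta> * u + h)^2) - 1) \<le> - (\<beta> * (1 - tanh (\<beta> * v + h)^2) - 1)"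
      using b by (simp add: algebra_simps)
  qed
  from convex_onD[OF this, of t x y] t xy show ?thesis by simp
qed

lemma TT_root:
  assumes b: "\<beta> > 0" and h: "h \<ge> 0" and c: "h > 0 \<or> \<beta> \<le> 1"
  shows "\<exists>y0. 0 \<le> y0 \<and> y0 < 1 \<and> TT \<beta> h y0 = 0 \<and> (\<forall>y. 0 \<le> y \<and> y < y0 \<longrightarrow> TT \<beta> h y > 0)
    \<and> (\<forall>y. y > y0 \<longrightarrow> TT \<beta> h y < 0) \<and> (h = 0 \<longrightarrow> y0 = 0)"
proof (cases "h > 0")
  case True
  have T0: "TT \<beta> h 0 = tanh h" by (simp add: TT_def)
  have T0p: "TT \<beta> h 0 > 0" using True T0 by simp
  have T1: "TT \<beta> h 1 < 0" using tanh_real_lt_1 by (simp add: TT_def)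
  obtain y0 where y0: "0 \<le> y0" "y0 \<le> 1" "TT \<beta> h y0 = 0"
    using IVT2'[of "TT \<beta> h" 1 0 0] T0p T1 TT_cont by force
  have y0p: "y0 > 0" using y0 T0p by (cases "y0 = 0") auto
  have y01: "y0 < 1" using y0 T1 by (cases "y0 = 1") auto
  have pos: "TT \<beta> h y > 0" if "0 \<le> y" "y < y0" for y
  proof -
    let ?t = "y / y0"
    have t: "0 \<le> ?t" "?t \<le> 1" "?t < 1" using that y0p by auto
    have "(1 - ?t) * TT \<beta> h 0 + ?t * TT \<beta> h y0 \<le> TT \<beta> h ((1 - ?t) * 0 + ?t * y0)"
      by (rule TT_concave[OF b h t(1,2)]) (use y0 in auto)
    moreover have "(1 - ?t) * 0 + ?t * y0 = y" using y0p by simp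
    moreover have "(1 - ?t) * TT \<beta> h 0 > 0" using t T0p by simp
    ultimately show ?thesis using y0 by simp
  qed
  have neg: "TT \<beta> h y < 0" if "y > y0" for y
  proof -
    let ?t = "y0 / y"
    have yp: "y > 0" using that y0p by simp
    have t: "0 \<le> ?t" "?t \<le> 1" "?t < 1" "0 < ?t" using that y0p yp by (auto simp: divide_simps)
    have "(1 - ?t) * TT \<beta> h 0 + ?t * TT \<beta> h y \<le> TT \<beta> h ((1 - ?t) * 0 + ?t * y)"
      by (rule TT_concave[OF b h t(1,2)]) (use yp in auto)
    moreover have "(1 - ?t) * 0 + ?t * y = y0" using yp by simp
    moreover have "(1 - ?t) * TT \<beta> h 0 > 0" using t T0p by simp
    ultimately have "?t * TT \<beta> h y < 0" using y0 by simp
    then show ?thesis using t(4) mult_nonneg_nonneg[of ?t "TT \<beta> h y"] by linarith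
  qed
  show ?thesis using y0 y01 pos neg True by (intro exI[of _ y0]) auto
next
  case False
  then have h0: "h = 0" and b1: "\<beta> \<le> 1" using h c by auto
  have neg: "TT \<beta> h y < 0" if "y > 0" for y
  proof -
    have "TT \<beta> h y < TT \<beta> h 0"
    proof (rule DERIV_neg_imp_decreasing_open[OF that])
      fix z :: real assume z: "0 < z" "z < y"
      have "tanh (\<beta> * z) > 0" using z b by (simp add: mult_pos_pos)
      then have "tanh (\<beta> * z)^2 > 0" by (rule zero_less_power)
      then have "\<beta> * (1 - tanh (\<beta> * z + h)^2) - 1 < 0" using b b1 h0
        by (smt (verit, best) mult_less_cancel_left_pos mult_right_le_one_le)
      then show "\<exists>y. (TT \<beta> h has_real_derivative y) (at z) \<and> y < 0" using TT_deriv by blast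
    qed (rule TT_cont)
    then show ?thesis using h0 by (simp add: TT_def)
  qed
  show ?thesis using neg h0 by (intro exI[of _ 0]) (auto simp: TT_def)
qed

lemma phi_strict:
  assumes b: "\<beta> > 0" and h: "h \<ge> 0" and y0: "0 \<le> y0" "TT \<beta> h y0 = 0"
    and pos: "\<forall>y. 0 \<le> y \<and> y < y0 \<longrightarrow> TT \<beta> h y > 0"
    and neg: "\<forall>y. y > y0 \<longrightarrow> TT \<beta> h y < 0"
    and h0: "h = 0 \<longrightarrow> y0 = 0"
    and x: "x \<noteq> y0"
  shows "phi \<beta> h x < phi \<beta> h y0"
proof -
  have incr: "phi \<beta> h x < phi \<beta> h y0" if "0 \<le> x" "x < y0" for x
  proof (rule DERIV_pos_imp_increasing_open[OF that(2)])
    fix z assume "x < z" "z < y0"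
    then have "\<beta> * TT \<beta> h z > 0" using pos that b by auto
    then show "\<exists>y. (phi \<beta> h has_real_derivative y) (at z) \<and> 0 < y" using phi_deriv by blast
  qed (rule phi_cont)
  have decr: "phi \<beta> h x < phi \<beta> h y0" if "y0 < x" for x
  proof (rule DERIV_neg_imp_decreasing_open[OF that])
    fix z assume "y0 < z" "z < x"
    then have "\<beta> * TT \<beta> h z < 0" using neg b by (auto simp: mult_pos_neg)
    then show "\<exists>y. (phi \<beta> h has_real_derivative y) (at z) \<and> y < 0" using phi_deriv by blast
  qed (rule phi_cont)
  have nonneg: "phi \<beta> h x \<le> phi \<beta> h y0" if "0 \<le> x" for x
    using incr[of x] decr[of x] that by (cases "x < y0"; cases "x = y0") auto
  show ?thesis
  proof (cases "x \<ge> 0")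
    case True then show ?thesis using incr decr x by (cases "x < y0") auto
  next
    case False
    then have xn: "x < 0" by simp
    have bx: "\<beta> * x < 0" using b xn by (rule mult_pos_neg)
    have le: "\<bar>\<beta> * x + h\<bar> \<le> \<bar>\<beta> * (- x) + h\<bar>" using bx h by (simp add: abs_if)
    have cle: "cosh (\<beta> * x + h) \<le> cosh (\<beta> * (- x) + h)"
      using cosh_real_nonneg_le_iff[OF abs_ge_zero abs_ge_zero, of "\<beta> * x + h" "\<beta> * (- x) + h"] le
      by simp
    show ?thesis
    proof (cases "h > 0")
      case True
      have lt: "\<bar>\<beta> * x + h\<bar> < \<bar>\<beta> * (- x) + h\<bar>" using bx True by (simp add: abs_if)
      have "cosh (\<beta> * x + h) < cosh (\<beta> * (- x) + h)"
        using cosh_real_nonneg_less_iff[OF abs_ge_zero abs_ge_zero, of "\<beta> * x + h" "\<beta> * (- x) + h"] lt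
        by simp
      then have "phi \<beta> h x < phi \<beta> h (- x)" by (simp add: phi_def)
      then show ?thesis using nonneg[of "-x"] xn by simp
    next
      case False
      then have "h = 0" using h by simp
      then have "y0 = 0" using h0 by simp
      have "phi \<beta> h x \<le> phi \<beta> h (- x)" using cle by (simp add: phi_def)
      also have "\<dots> < phi \<beta> h y0" using decr[of "-x"] xn \<open>y0 = 0\<close> by simp
      finally show ?thesis .
    qed
  qed
qed

lemma m0_eq:
  assumes "\<And>x. x \<noteq> y0 \<Longrightarrow> phi \<beta> h x < phi \<beta> h y0"
  shows "m0 \<beta> h = y0"
  unfolding m0_def
proof (rule the_equality)
  show "\<forall>y. ln 2 + ln (cosh (\<beta> * y + h)) - \<beta> * y\<^sup>2 / 2 \<le> ln 2 + ln (cosh (\<beta> * y0 + h)) - \<beta> * y0\<^sup>2 / 2"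
  proof
    fix y show "ln 2 + ln (cosh (\<beta> * y + h)) - \<beta> * y\<^sup>2 / 2 \<le> ln 2 + ln (cosh (\<beta> * y0 + h)) - \<beta> * y0\<^sup>2 / 2"
      using assms[of y] unfolding phi_def by (cases "y = y0") auto
  qed
  fix x assume "\<forall>y. ln 2 + ln (cosh (\<beta> * y + h)) - \<beta> * y\<^sup>2 / 2 \<le> ln 2 + ln (cosh (\<beta> * x + h)) - \<beta> * x\<^sup>2 / 2"
  then have "phi \<beta> h y0 \<le> phi \<beta> h x" unfolding phi_def by blast
  then show "x = y0" using assms by (meson not_le)
qed

lemma phi_flip: "phi \<beta> (- h) x = phi \<beta> h (- x)"
proof -
  have "cosh (\<beta> * x + - h) = cosh (\<beta> * (- x) + h)"
    using cosh_minus[of "\<beta> * x - h"] by (simp add: algebra_simps)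
  then show ?thesis by (simp add: phi_def)
qed

lemma unif_bounds:
  assumes "0 \<le> y0" "d > 0"
    and pos: "\<forall>y. 0 \<le> y \<and> y < y0 \<longrightarrow> TT \<beta> h y > 0"
    and neg: "\<forall>y. y > y0 \<longrightarrow> TT \<beta> h y < 0"
  shows "\<exists>\<eta>>0. (\<forall>y. 0 \<le> y \<and> y \<le> y0 - d \<longrightarrow> TT \<beta> h y \<ge> \<eta>) \<and> (\<forall>y. y0 + d \<le> y \<and> y \<le> 1 \<longrightarrow> TT \<beta> h y \<le> - \<eta>)"
proof -
  obtain \<eta>1 where e1: "\<eta>1 > 0" "\<forall>y. 0 \<le> y \<and> y \<le> y0 - d \<longrightarrow> TT \<beta> h y \<ge> \<eta>1"
  proof (cases "y0 - d < 0")
    case True then show ?thesis using that[of 1] by auto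
  next
    case False
    then have ne: "{0..y0-d} \<noteq> {}" by simp
    obtain x where x: "x \<in> {0..y0-d}" "\<forall>y\<in>{0..y0-d}. TT \<beta> h x \<le> TT \<beta> h y"
      using continuous_attains_inf[OF compact_Icc ne TT_cont] by blast
    have "TT \<beta> h x > 0" using pos x(1) assms(2) by auto
    then show ?thesis using that[of "TT \<beta> h x"] x by auto
  qed
  obtain \<eta>2 where e2: "\<eta>2 > 0" "\<forall>y. y0 + d \<le> y \<and> y \<le> 1 \<longrightarrow> TT \<beta> h y \<le> - \<eta>2"
  proof (cases "y0 + d > 1")
    case True then show ?thesis using that[of 1] by auto
  next
    case False
    then have ne: "{y0+d..1} \<noteq> {}" by simp
    obtain x where x: "x \<in> {y0+d..1}" "\<forall>y\<in>{y0+d..1}. TT \<beta> h y \<le> TT \<beta> h x"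
      using continuous_attains_sup[OF compact_Icc ne TT_cont] by blast
    have "TT \<beta> h x < 0" using neg x(1) assms(2) by auto
    then show ?thesis using that[of "- TT \<beta> h x"] x by auto
  qed
  have m: "min \<eta>1 \<eta>2 \<le> \<eta>1" "min \<eta>1 \<eta>2 \<le> \<eta>2" "min \<eta>1 \<eta>2 > 0" using e1 e2 by auto
  show ?thesis
  proof (intro exI[of _ "min \<eta>1 \<eta>2"] conjI allI impI)
    fix y assume "0 \<le> y \<and> y \<le> y0 - d" then show "min \<eta>1 \<eta>2 \<le> TT \<beta> h y" using e1 m by fastforce
  next
    fix y assume "y0 + d \<le> y \<and> y \<le> 1" then show "TT \<beta> h y \<le> - min \<eta>1 \<eta>2" using e2 m by fastforce
  qed (use m in auto)
qed

definition xx :: "nat \<Rightarrow> nat \<Rightarrow> real" where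
  "xx N j = (2 * real j - real N) / real N"

definition aa :: "real \<Rightarrow> real \<Rightarrow> nat \<Rightarrow> nat \<Rightarrow> real" where
  "aa \<beta> h N j = real (N choose j) * W \<beta> h N (2 * real j - real N)"

lemma aa_nonneg: "aa \<beta> h N j \<ge> 0"
  by (simp add: aa_def W_def)

lemma aa_pos: "j \<le> N \<Longrightarrow> aa \<beta> h N j > 0"
  by (simp add: aa_def W_def)

lemma binom_step: "j < N \<Longrightarrow> real (Suc j) * real (N choose Suc j) = real (N - j) * real (N choose j)"
proof -
  assume "j < N"
  have "Suc j * (N choose Suc j) = N * ((N - 1) choose j)" by (rule binomial_absorption)
  also have "\<dots> = (N - j) * (N choose j)" by (rule binomial_absorb_comp[symmetric])
  finally show ?thesis by (metis of_nat_mult)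
qed

lemma W_step:
  assumes "N > 0"
  shows "W \<beta> h N (k + 2) = W \<beta> h N k * exp (2 * \<beta> * (k + 1) / real N + 2 * h)"
proof -
  have "\<beta> / real N * (((k + 2)^2 - real N) / 2) + h * (k + 2)
     = \<beta> / real N * ((k^2 - real N) / 2) + h * k + (2 * \<beta> * (k + 1) / real N + 2 * h)"
    using assms by (simp add: field_simps power2_eq_square)
  then show ?thesis by (simp add: W_def exp_add[symmetric])
qed

lemma aa_step:
  assumes j: "j < N"
  shows "aa \<beta> h N (Suc j) * real (Suc j) = aa \<beta> h N j * real (N - j) * exp (2 * \<beta> * xx N j + 2 * \<beta> / real N + 2 * h)"
proof -
  have N: "N > 0" using j by simp
  have e: "2 * real (Suc j) - real N = (2 * real j - real N) + 2" by simp
  have x: "2 * \<beta> * (2 * real j - real N + 1) / real N = 2 * \<beta> * xx N j + 2 * \<beta> / real N"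
    using N by (simp add: xx_def field_simps)
  have "aa \<beta> h N (Suc j) * real (Suc j) = (real (Suc j) * real (N choose Suc j)) * W \<beta> h N (2 * real (Suc j) - real N)"
    by (simp add: aa_def)
  also have "\<dots> = real (N - j) * real (N choose j) * (W \<beta> h N (2 * real j - real N) * exp (2 * \<beta> * (2 * real j - real N + 1) / real N + 2 * h))"
    by (simp only: binom_step[OF j] e W_step[OF N])
  finally show ?thesis by (simp add: aa_def x)
qed

lemma tanh_exp: "tanh (t::real) * (exp (2 * t) + 1) = exp (2 * t) - 1"
proof -
  have u: "exp (2 * t) * exp (- 2 * t) = 1" by (simp add: exp_add[symmetric])
  have p: "1 + exp (- 2 * t) > 0" by (simp add: add_pos_pos)
  have "tanh t * (exp (2 * t) + 1) = (1 - exp (- 2 * t)) / (1 + exp (- 2 * t)) * (exp (2 * t) * (1 + exp (- 2 * t)))"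
    using u by (simp add: tanh_real_altdef algebra_simps)
  also have "\<dots> = (1 - exp (- 2 * t)) * exp (2 * t)" using p by simp
  also have "\<dots> = exp (2 * t) - 1" using u by (simp add: algebra_simps)
  finally show ?thesis .
qed

lemma r_ident:
  fixes x t :: real
  assumes "x > -1"
  shows "(1 - x) / (1 + x) * exp (2 * t) = 1 + (exp (2 * t) + 1) * (tanh t - x) / (1 + x)"
proof -
  have "(1 - x) * exp (2 * t) = (1 + x) + (exp (2 * t) + 1) * (tanh t - x)"
    using tanh_exp[of t] by (simp add: algebra_simps)
  then show ?thesis using assms by (simp add: field_simps)
qed

lemma r_upper:
  assumes x: "0 \<le> x" "x \<le> 1" and T: "TT \<beta> h x \<le> - \<eta>" and e: "\<eta> > 0"
  shows "(1 - x) / (1 + x) * exp (2 * (\<beta> * x + h)) \<le> 1 - \<eta> / 2"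
proof -
  let ?E = "exp (2 * (\<beta> * x + h))"
  have "(exp (2 * (\<beta> * x + h)) + 1) * (tanh (\<beta> * x + h) - x) / (1 + x) \<le> - \<eta> / 2"
  proof -
    have E1: "?E + 1 \<ge> 1" by simp
    have t: "tanh (\<beta> * x + h) - x \<le> - \<eta>" using T by (simp add: TT_def)
    have "(?E + 1) * (tanh (\<beta> * x + h) - x) \<le> 1 * (- \<eta>)"
      using E1 t e by (smt (verit, ccfv_SIG) mult_le_cancel_right1 mult_minus_right)
    also have "\<dots> \<le> (1 + x) * (- \<eta> / 2)" using x e by (simp add: algebra_simps)
    finally show ?thesis using x by (simp add: divide_le_eq mult.commute)
  qed
  then show ?thesis using r_ident[of x "\<beta> * x + h"] x by simp
qed

lemma r_lower:
  assumes x: "0 \<le> x" "x \<le> 1" and T: "TT \<beta> h x \<ge> \<eta>" and e: "\<eta> > 0"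
  shows "(1 - x) / (1 + x) * exp (2 * (\<beta> * x + h)) \<ge> 1 + \<eta> / 2"
proof -
  let ?E = "exp (2 * (\<beta> * x + h))"
  have "(exp (2 * (\<beta> * x + h)) + 1) * (tanh (\<beta> * x + h) - x) / (1 + x) \<ge> \<eta> / 2"
  proof -
    have E1: "?E + 1 \<ge> 1" by simp
    have t: "tanh (\<beta> * x + h) - x \<ge> \<eta>" using T by (simp add: TT_def)
    have "(1 + x) * (\<eta> / 2) \<le> 1 * \<eta>" using x e by (simp add: algebra_simps)
    also have "\<dots> \<le> (?E + 1) * (tanh (\<beta> * x + h) - x)"
      using E1 t e by (intro mult_mono) auto
    finally show ?thesis using x by (simp add: le_divide_eq mult.commute)
  qed
  then show ?thesis using r_ident[of x "\<beta> * x + h"] x by simp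
qed

lemma aa_succ:
  assumes j: "j < N"
  shows "aa \<beta> h N (Suc j) = aa \<beta> h N j * ((real N - real j) / (real j + 1)) * exp (2 * \<beta> * xx N j + 2 * \<beta> / real N + 2 * h)"
proof -
  have "aa \<beta> h N (Suc j) * (real j + 1) = aa \<beta> h N j * (real N - real j) * exp (2 * \<beta> * xx N j + 2 * \<beta> / real N + 2 * h)"
    using aa_step[OF j, of \<beta> h] j by (simp add: of_nat_diff add.commute)
  then show ?thesis by (simp add: field_simps)
qed

lemma ratio_upper:
  assumes j: "j < N" and x: "0 \<le> xx N j" and T: "TT \<beta> h (xx N j) \<le> - \<eta>" and e: "\<eta> > 0"
  shows "aa \<beta> h N (Suc j) \<le> aa \<beta> h N j * ((1 - \<eta> / 2) * exp (2 * \<beta> / real N))"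
proof -
  let ?x = "xx N j"
  have N: "real N > 0" using j by simp
  have ij: "2 * real j \<ge> real N" using x N by (simp add: xx_def divide_nonneg_pos zero_le_divide_iff)
  then have jp: "real j > 0" using N by simp
  have x1: "?x \<le> 1" using j N by (simp add: xx_def divide_le_eq)
  have q: "(1 - ?x) / (1 + ?x) = (real N - real j) / real j"
    using N jp by (simp add: xx_def field_simps)
  have le1: "(real N - real j) / (real j + 1) \<le> (1 - ?x) / (1 + ?x)"
    unfolding q using j jp by (intro divide_left_mono) auto
  have ex: "exp (2 * \<beta> * ?x + 2 * \<beta> / real N + 2 * h) = exp (2 * (\<beta> * ?x + h)) * exp (2 * \<beta> / real N)"
    by (simp add: exp_add[symmetric] algebra_simps)
  have "aa \<beta> h N (Suc j) = aa \<beta> h N j * ((real N - real j) / (real j + 1)) * (exp (2 * (\<beta> * ?x + h)) * exp (2 * \<beta> / real N))"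
    using aa_succ[OF j] ex by simp
  also have "\<dots> \<le> aa \<beta> h N j * ((1 - ?x) / (1 + ?x)) * (exp (2 * (\<beta> * ?x + h)) * exp (2 * \<beta> / real N))"
    using le1 aa_nonneg by (intro mult_right_mono mult_left_mono) auto
  also have "\<dots> = aa \<beta> h N j * ((1 - ?x) / (1 + ?x) * exp (2 * (\<beta> * ?x + h))) * exp (2 * \<beta> / real N)"
    by simp
  also have "\<dots> \<le> aa \<beta> h N j * (1 - \<eta> / 2) * exp (2 * \<beta> / real N)"
    using r_upper[OF x x1 T e] aa_nonneg by (intro mult_right_mono mult_left_mono) auto
  finally show ?thesis by simp
qed

lemma div2: "(n::real) \<noteq> 0 \<Longrightarrow> (2 * A / n) / (2 * B / n) = A / B"
  by (cases "B = 0") (simp_all add: field_simps)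

lemma ratio_lower:
  assumes j: "j < N" and x: "0 \<le> xx N (Suc j)" and T: "TT \<beta> h (xx N (Suc j)) \<ge> \<eta>" and e: "\<eta> > 0"
  shows "aa \<beta> h N (Suc j) \<ge> aa \<beta> h N j * ((1 + \<eta> / 2) * exp (- 2 * \<beta> / real N))"
proof -
  let ?x = "xx N (Suc j)"
  have N: "real N > 0" using j by simp
  have x1: "?x \<le> 1" using j N by (simp add: xx_def divide_le_eq)
  have a1: "1 - ?x = 2 * (real N - real j - 1) / real N" using N by (simp add: xx_def field_simps)
  have a2: "1 + ?x = 2 * (real j + 1) / real N" using N by (simp add: xx_def field_simps)
  have q: "(1 - ?x) / (1 + ?x) = (real N - real j - 1) / (real j + 1)"
    unfolding a1 a2 using N div2[of "real N" "real N - real j - 1" "real j + 1"] by simp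
  have le1: "(1 - ?x) / (1 + ?x) \<le> (real N - real j) / (real j + 1)"
    unfolding q by (intro divide_right_mono) auto
  have xs: "xx N j = ?x - 2 / real N" using N by (simp add: xx_def field_simps)
  have ex: "exp (2 * \<beta> * xx N j + 2 * \<beta> / real N + 2 * h) = exp (2 * (\<beta> * ?x + h)) * exp (- 2 * \<beta> / real N)"
    unfolding xs by (simp add: exp_add[symmetric] algebra_simps)
  have r: "1 + \<eta> / 2 \<le> (1 - ?x) / (1 + ?x) * exp (2 * (\<beta> * ?x + h))" by (rule r_lower[OF x x1 T e])
  have "(1 + \<eta> / 2) * exp (- 2 * \<beta> / real N) \<le> ((1 - ?x) / (1 + ?x) * exp (2 * (\<beta> * ?x + h))) * exp (- 2 * \<beta> / real N)"
    using r by (rule mult_right_mono) simp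
  then have "aa \<beta> h N j * ((1 + \<eta> / 2) * exp (- 2 * \<beta> / real N))
      \<le> aa \<beta> h N j * (((1 - ?x) / (1 + ?x) * exp (2 * (\<beta> * ?x + h))) * exp (- 2 * \<beta> / real N))"
    by (rule mult_left_mono) (rule aa_nonneg)
  also have "\<dots> = aa \<beta> h N j * ((1 - ?x) / (1 + ?x)) * (exp (2 * (\<beta> * ?x + h)) * exp (- 2 * \<beta> / real N))"
    by (simp only: mult.assoc)
  also have "\<dots> \<le> aa \<beta> h N j * ((real N - real j) / (real j + 1)) * (exp (2 * (\<beta> * ?x + h)) * exp (- 2 * \<beta> / real N))"
    using le1 aa_nonneg by (intro mult_right_mono mult_left_mono) auto
  also have "\<dots> = aa \<beta> h N (Suc j)"
    using aa_succ[OF j] ex by simp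
  finally show ?thesis .
qed

lemma xx_add: "N > 0 \<Longrightarrow> xx N (j + l) = xx N j + 2 * real l / real N"
  by (simp add: xx_def field_simps)

lemma xx_bounds: "j \<le> N \<Longrightarrow> N > 0 \<Longrightarrow> -1 \<le> xx N j \<and> xx N j \<le> 1"
  by (simp add: xx_def field_simps)

lemma xx_refl: "j \<le> N \<Longrightarrow> xx N (N - j) = - xx N j"
  by (simp add: xx_def of_nat_diff minus_divide_left algebra_simps)

lemma aa_reflect:
  assumes "j \<le> N"
  shows "aa \<beta> h N j = aa \<beta> h N (N - j) * exp (2 * h * (2 * real j - real N))"
proof -
  have c: "N choose j = N choose (N - j)" using assms by (rule binomial_symmetric)
  have k: "2 * real (N - j) - real N = - (2 * real j - real N)" using assms by (simp add: of_nat_diff)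
  have Wr: "W \<beta> h N k = W \<beta> h N (- k) * exp (2 * h * k)" for k
  proof -
    have "\<beta> / real N * ((k^2 - real N) / 2) + h * k = (\<beta> / real N * (((-k)^2 - real N) / 2) + h * (-k)) + 2 * h * k"
      by (simp add: algebra_simps)
    then show ?thesis unfolding W_def by (simp add: exp_add[symmetric])
  qed
  have "W \<beta> h N (2 * real j - real N) = W \<beta> h N (- (2 * real j - real N)) * exp (2 * h * (2 * real j - real N))"
    by (rule Wr)
  then show ?thesis unfolding aa_def c k by simp
qed

lemma nq_lim: "0 < \<kappa> \<Longrightarrow> \<kappa> < (1::real) \<Longrightarrow> (\<lambda>N. (real N + 1) * \<kappa> ^ N) \<longlonglongrightarrow> 0"
proof -
  assume k: "0 < \<kappa>" "\<kappa> < 1"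
  have a: "(\<lambda>N. real N * \<kappa> ^ N) \<longlonglongrightarrow> 0" using powser_times_n_limit_0[of \<kappa>] k by simp
  have b: "(\<lambda>N. \<kappa> ^ N) \<longlonglongrightarrow> 0" using k by (intro LIMSEQ_power_zero) simp
  have "(\<lambda>N. real N * \<kappa> ^ N + \<kappa> ^ N) \<longlonglongrightarrow> 0 + 0" by (intro tendsto_add a b)
  then show ?thesis by (simp add: algebra_simps)
qed

lemma sum_le_total: "j \<le> N \<Longrightarrow> aa \<beta> h N j \<le> (\<Sum>k\<le>N. aa \<beta> h N k)"
  using aa_nonneg by (intro member_le_sum) auto

lemma total_pos: "(\<Sum>k\<le>N. aa \<beta> h N k) > 0"
  using aa_pos by (intro sum_pos) auto

lemma lin2: "(x::real) \<le> y \<Longrightarrow> y \<le> P / 4 \<Longrightarrow> 2 * x \<le> P / 2"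
  by linarith

lemma lin3: "2 * x \<le> P / 2 \<Longrightarrow> P \<le> 2 * y \<Longrightarrow> 0 \<le> P \<Longrightarrow> x \<le> (y::real)"
  by linarith

lemma left_decay:
  assumes N: "N > 0" and q2: "1 / ((1 + \<eta> / 2) * exp (- 2 * \<beta> / real N)) < \<theta>"
    and lo: "\<forall>y. 0 \<le> y \<and> y \<le> y0 - d / 2 \<longrightarrow> TT \<beta> h y \<ge> \<eta>"
    and e: "\<eta> > 0" and y01: "y0 < 1" and d: "d > 0"
    and j: "j \<le> N" "0 \<le> xx N j" "xx N j \<le> y0 - d"
    and L: "real L \<le> real N * d / 4"
  shows "aa \<beta> h N j \<le> \<theta> ^ L * (\<Sum>k\<le>N. aa \<beta> h N k)"
proof -
  have rp: "(1 + \<eta> / 2) * exp (- 2 * \<beta> / real N) > 0" using e by simp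
  have th: "\<theta> > 0" using q2 rp by (smt (verit) divide_pos_pos)
  have claim: "l \<le> L \<longrightarrow> j + l \<le> N \<and> aa \<beta> h N j \<le> \<theta> ^ l * aa \<beta> h N (j + l)" for l
  proof (induction l)
    case 0 then show ?case using j by simp
  next
    case (Suc l)
    show ?case
    proof
      assume l: "Suc l \<le> L"
      then have IH: "j + l \<le> N" "aa \<beta> h N j \<le> \<theta> ^ l * aa \<beta> h N (j + l)" using Suc by auto
      let ?k = "j + l"
      have xs: "xx N (Suc ?k) = xx N j + 2 * real (Suc l) / real N"
        using xx_add[OF N, of j "Suc l"] by simp
      have sl: "real (Suc l) \<le> real L" using of_nat_mono[OF l] .
      have dl: "2 * real (Suc l) \<le> real N * d / 2" using lin2[OF sl L] .
      have "2 * real (Suc l) / real N \<le> d / 2" using dl N by (simp add: divide_le_eq algebra_simps)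
      then have xub: "xx N (Suc ?k) \<le> y0 - d / 2" using xs j by linarith
      have xlb: "0 \<le> xx N (Suc ?k)" using xs j N by simp
      have "xx N (Suc ?k) < 1" using xub y01 d by linarith
      then have kN: "?k < N" using N by (simp add: xx_def divide_less_eq)
      have T: "TT \<beta> h (xx N (Suc ?k)) \<ge> \<eta>" using lo xub xlb by blast
      have r: "aa \<beta> h N (Suc ?k) \<ge> aa \<beta> h N ?k * ((1 + \<eta> / 2) * exp (- 2 * \<beta> / real N))"
        by (rule ratio_lower[OF kN xlb T e])
      have "aa \<beta> h N ?k \<le> aa \<beta> h N (Suc ?k) / ((1 + \<eta> / 2) * exp (- 2 * \<beta> / real N))"
        using r rp by (simp add: le_divide_eq)
      also have "\<dots> = aa \<beta> h N (Suc ?k) * (1 / ((1 + \<eta> / 2) * exp (- 2 * \<beta> / real N)))" by simp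
      also have "\<dots> \<le> aa \<beta> h N (Suc ?k) * \<theta>"
        using q2 aa_nonneg by (intro mult_left_mono) auto
      finally have "aa \<beta> h N ?k \<le> \<theta> * aa \<beta> h N (Suc ?k)" by (simp add: mult.commute)
      then have "\<theta> ^ l * aa \<beta> h N ?k \<le> \<theta> ^ l * (\<theta> * aa \<beta> h N (Suc ?k))"
        using th by (intro mult_left_mono) auto
      with IH(2) have "aa \<beta> h N j \<le> \<theta> ^ l * (\<theta> * aa \<beta> h N (Suc ?k))" by (rule order_trans)
      then show "j + Suc l \<le> N \<and> aa \<beta> h N j \<le> \<theta> ^ Suc l * aa \<beta> h N (j + Suc l)"
        using kN by (simp add: mult_ac)
    qed
  qed
  from claim[of L] have "j + L \<le> N" "aa \<beta> h N j \<le> \<theta> ^ L * aa \<beta> h N (j + L)" by auto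
  moreover have "\<theta> ^ L * aa \<beta> h N (j + L) \<le> \<theta> ^ L * (\<Sum>k\<le>N. aa \<beta> h N k)"
    using th sum_le_total[OF calculation(1)] by (intro mult_left_mono) auto
  ultimately show ?thesis by linarith
qed

lemma right_decay:
  assumes N: "N > 0" and q1: "(1 - \<eta> / 2) * exp (2 * \<beta> / real N) < \<theta>"
    and up: "\<forall>y. y0 + d / 2 \<le> y \<and> y \<le> 1 \<longrightarrow> TT \<beta> h y \<le> - \<eta>"
    and e: "\<eta> > 0" and y0: "0 \<le> y0" and d: "d > 0" and th: "\<theta> > 0"
    and j: "j \<le> N" "y0 + d \<le> xx N j"
    and L: "real L \<le> real N * d / 4"
  shows "aa \<beta> h N j \<le> \<theta> ^ L * (\<Sum>k\<le>N. aa \<beta> h N k)"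
proof -
  have claim: "l \<le> L \<longrightarrow> l \<le> j \<and> aa \<beta> h N j \<le> \<theta> ^ l * aa \<beta> h N (j - l)" for l
  proof (induction l)
    case 0 then show ?case by simp
  next
    case (Suc l)
    show ?case
    proof
      assume l: "Suc l \<le> L"
      then have IH: "l \<le> j" "aa \<beta> h N j \<le> \<theta> ^ l * aa \<beta> h N (j - l)" using Suc by auto
      have sl: "real (Suc l) \<le> real L" using of_nat_mono[OF l] .
      have dl: "2 * real (Suc l) \<le> real N * d / 2" using lin2[OF sl L] .
      have "y0 + d \<le> (2 * real j - real N) / real N" using j by (simp add: xx_def)
      then have "(y0 + d) * real N \<le> 2 * real j - real N" using N by (simp add: le_divide_eq)
      moreover have "(y0 + d) * real N = y0 * real N + real N * d" by (simp add: algebra_simps)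
      moreover have "y0 * real N \<ge> 0" using y0 by simp
      ultimately have Nd: "real N * d \<le> 2 * real j" by linarith
      have "real N * d \<ge> 0" using d by simp
      then have "real (Suc l) \<le> real j" using lin3[OF dl Nd] by simp
      then have slj: "Suc l \<le> j" by linarith
      define k where "k = j - Suc l"
      have jk: "j = k + Suc l" using slj by (simp add: k_def)
      have sk: "Suc k = j - l" using slj by (simp add: k_def)
      have kN: "k < N" using jk j by simp
      have xs: "xx N j = xx N k + 2 * real (Suc l) / real N"
        using xx_add[OF N, of k "Suc l"] jk by simp
      have "2 * real (Suc l) / real N \<le> d / 2" using dl N by (simp add: divide_le_eq algebra_simps)
      then have xlb: "y0 + d / 2 \<le> xx N k" using xs j by linarith
      have xub: "xx N k \<le> 1" using xx_bounds[of k N] kN N by simp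
      have x0: "0 \<le> xx N k" using xlb y0 d by linarith
      have T: "TT \<beta> h (xx N k) \<le> - \<eta>" using up xlb xub by blast
      have r: "aa \<beta> h N (Suc k) \<le> aa \<beta> h N k * ((1 - \<eta> / 2) * exp (2 * \<beta> / real N))"
        by (rule ratio_upper[OF kN x0 T e])
      also have "\<dots> \<le> aa \<beta> h N k * \<theta>" using q1 aa_nonneg by (intro mult_left_mono) auto
      finally have "aa \<beta> h N (j - l) \<le> \<theta> * aa \<beta> h N (j - Suc l)" using sk by (simp add: k_def mult.commute)
      then have "\<theta> ^ l * aa \<beta> h N (j - l) \<le> \<theta> ^ l * (\<theta> * aa \<beta> h N (j - Suc l))"
        using th by (intro mult_left_mono) auto
      with IH(2) have "aa \<beta> h N j \<le> \<theta> ^ l * (\<theta> * aa \<beta> h N (j - Suc l))" by (rule order_trans)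
      then show "Suc l \<le> j \<and> aa \<beta> h N j \<le> \<theta> ^ Suc l * aa \<beta> h N (j - Suc l)"
        using slj by (simp add: mult_ac)
    qed
  qed
  from claim[of L] have "aa \<beta> h N j \<le> \<theta> ^ L * aa \<beta> h N (j - L)" by auto
  moreover have "\<theta> ^ L * aa \<beta> h N (j - L) \<le> \<theta> ^ L * (\<Sum>k\<le>N. aa \<beta> h N k)"
    using th sum_le_total[of "j - L" N] j by (intro mult_left_mono) auto
  ultimately show ?thesis by linarith
qed

lemma bad_bound:
  assumes b: "\<beta> > 0" and h: "h \<ge> 0" and y0: "0 \<le> y0" "y0 < 1"
    and h0: "h = 0 \<longrightarrow> y0 = 0"
    and d: "d > 0" and ds: "h > 0 \<longrightarrow> d \<le> y0 / 2"
    and e: "\<eta> > 0" and th: "\<theta> > 0"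
    and lo: "\<forall>y. 0 \<le> y \<and> y \<le> y0 - d / 2 \<longrightarrow> TT \<beta> h y \<ge> \<eta>"
    and up: "\<forall>y. y0 + d / 2 \<le> y \<and> y \<le> 1 \<longrightarrow> TT \<beta> h y \<le> - \<eta>"
    and N: "N > 0" and q1: "(1 - \<eta> / 2) * exp (2 * \<beta> / real N) < \<theta>"
    and q2: "1 / ((1 + \<eta> / 2) * exp (- 2 * \<beta> / real N)) < \<theta>"
    and L: "real L \<le> real N * d / 4"
    and j: "j \<le> N" "\<bar>xx N j - y0\<bar> > d"
  shows "aa \<beta> h N j \<le> (\<theta> ^ L + (if h > 0 then exp (- h * real N * y0) else 0)) * (\<Sum>k\<le>N. aa \<beta> h N k)"
proof -
  let ?S = "\<Sum>k\<le>N. aa \<beta> h N k"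
  let ?e = "if h > 0 then exp (- h * real N * y0) else 0"
  have Sp: "?S > 0" by (rule total_pos)
  have e0: "?e \<ge> 0" by simp
  have A: "\<theta> ^ L * ?S \<le> (\<theta> ^ L + ?e) * ?S" using Sp e0 by (simp add: distrib_right)
  have tl: "aa \<beta> h N i \<le> \<theta> ^ L * ?S" if i: "i \<le> N" "0 \<le> xx N i" "\<bar>xx N i - y0\<bar> > d" for i
  proof (cases "xx N i \<le> y0 - d")
    case True
    show ?thesis by (rule left_decay[OF N q2 lo e y0(2) d i(1,2) True L])
  next
    case False
    then have "y0 + d \<le> xx N i" using i(3) by linarith
    then show ?thesis by (rule right_decay[OF N q1 up e y0(1) d th i(1)  _ L])
  qed
  show ?thesis
  proof (cases "xx N j \<ge> 0")
    case True
    then show ?thesis using tl[OF j(1) True j(2)] A by linarith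
  next
    case False
    then have xn: "xx N j < 0" by simp
    have xr: "xx N (N - j) = - xx N j" using j(1) by (rule xx_refl)
    have kn: "2 * real j - real N < 0" using xn N by (simp add: xx_def divide_less_0_iff)
    have refl: "aa \<beta> h N j = aa \<beta> h N (N - j) * exp (2 * h * (2 * real j - real N))"
      using j(1) by (rule aa_reflect)
    have ex1: "exp (2 * h * (2 * real j - real N)) \<le> 1"
      using h kn by (simp add: mult_nonneg_nonpos)
    have le1: "aa \<beta> h N j \<le> aa \<beta> h N (N - j)"
      using refl ex1 aa_nonneg[of \<beta> h N "N - j"] by (simp add: mult_left_le)
    show ?thesis
    proof (cases "\<bar>xx N (N - j) - y0\<bar> > d")
      case True
      have "aa \<beta> h N (N - j) \<le> \<theta> ^ L * ?S" by (rule tl) (use xr xn True in auto)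
      then show ?thesis using le1 A by linarith
    next
      case False
      then have near: "\<bar>- xx N j - y0\<bar> \<le> d" using xr by simp
      have hp: "h > 0"
      proof (rule ccontr)
        assume "\<not> h > 0" then have "y0 = 0" using h h0 by simp
        then show False using near j(2) xn by simp
      qed
      have "- xx N j \<ge> y0 / 2" using near ds hp by linarith
      then have "xx N j \<le> - (y0 / 2)" by linarith
      then have "(2 * real j - real N) / real N \<le> - (y0 / 2)" by (simp only: xx_def)
      then have kb: "2 * real j - real N \<le> - (y0 / 2) * real N" using N by (simp add: divide_le_eq)
      have "2 * h * (2 * real j - real N) \<le> 2 * h * (- (y0 / 2) * real N)"
        using kb hp by (intro mult_left_mono) auto
      then have "exp (2 * h * (2 * real j - real N)) \<le> exp (- h * real N * y0)"
        by (simp add: algebra_simps)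
      then have "aa \<beta> h N j \<le> aa \<beta> h N (N - j) * exp (- h * real N * y0)"
        using refl aa_nonneg[of \<beta> h N "N - j"] by (simp add: mult_left_mono)
      also have "\<dots> \<le> ?S * exp (- h * real N * y0)"
        using sum_le_total[of "N - j" N \<beta> h] by (intro mult_right_mono) auto
      also have "\<dots> \<le> (\<theta> ^ L + ?e) * ?S" using hp Sp th by (simp add: distrib_right)
      finally show ?thesis .
    qed
  qed
qed

lemma theta_pow_bound:
  assumes th: "0 < \<theta>" "\<theta> < 1" and d: "d > 0"
    and L: "real L \<ge> real N * d / 4 - 1"
  shows "\<theta> ^ L \<le> (\<theta> powr (d / 4)) ^ N / \<theta>"
proof -
  have "\<theta> ^ L = \<theta> powr real L" using th by (simp add: powr_realpow)
  also have "\<dots> \<le> \<theta> powr (real N * d / 4 - 1)" using th L by (intro powr_mono') auto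
  also have "\<dots> = \<theta> powr (real N * d / 4) / \<theta>" using th by (simp add: powr_diff)
  also have "\<theta> powr (real N * d / 4) = (\<theta> powr (d / 4)) powr real N" by (simp add: powr_powr mult.commute)
  also have "\<dots> = (\<theta> powr (d / 4)) ^ N" using th by (simp add: powr_realpow)
  finally show ?thesis .
qed

lemma tail_bound:
  assumes b: "\<beta> > 0" and h: "h \<ge> 0" and y0: "0 \<le> y0" "y0 < 1"
    and pos: "\<forall>y. 0 \<le> y \<and> y < y0 \<longrightarrow> TT \<beta> h y > 0"
    and neg: "\<forall>y. y > y0 \<longrightarrow> TT \<beta> h y < 0"
    and h0: "h = 0 \<longrightarrow> y0 = 0" and hp: "h > 0 \<longrightarrow> y0 > 0"
    and d: "d > 0" and ds: "h > 0 \<longrightarrow> d \<le> y0 / 2"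
  shows "\<exists>c. (\<lambda>N. (real N + 1) * c N) \<longlonglongrightarrow> 0 \<and> (\<forall>N. c N \<ge> 0) \<and>
    (\<forall>\<^sub>F N in sequentially. \<forall>j\<le>N. \<bar>xx N j - y0\<bar> > d \<longrightarrow> aa \<beta> h N j \<le> c N * (\<Sum>k\<le>N. aa \<beta> h N k))"
proof -
  obtain \<eta> where e: "\<eta> > 0" and lo: "\<forall>y. 0 \<le> y \<and> y \<le> y0 - d / 2 \<longrightarrow> TT \<beta> h y \<ge> \<eta>"
    and up: "\<forall>y. y0 + d / 2 \<le> y \<and> y \<le> 1 \<longrightarrow> TT \<beta> h y \<le> - \<eta>"
    using unif_bounds[of y0 "d / 2" \<beta> h] y0 d pos neg by auto
  define \<theta>0 where "\<theta>0 = max (1 - \<eta> / 2) (1 / (1 + \<eta> / 2))"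
  have t0: "\<theta>0 < 1" "\<theta>0 > 0" using e by (auto simp: \<theta>0_def field_simps)
  define \<theta> where "\<theta> = (1 + \<theta>0) / 2"
  have th: "0 < \<theta>" "\<theta> < 1" "\<theta>0 < \<theta>" using t0 by (auto simp: \<theta>_def)
  have lim1: "(\<lambda>N. (1 - \<eta> / 2) * exp (2 * \<beta> / real N)) \<longlonglongrightarrow> (1 - \<eta> / 2) * exp 0"
    by (intro tendsto_intros)
  have ev1: "\<forall>\<^sub>F N in sequentially. (1 - \<eta> / 2) * exp (2 * \<beta> / real N) < \<theta>"
    using order_tendstoD(2)[OF lim1, of \<theta>] th unfolding \<theta>0_def by auto
  have lim2: "(\<lambda>N. 1 / ((1 + \<eta> / 2) * exp (- 2 * \<beta> / real N))) \<longlonglongrightarrow> 1 / ((1 + \<eta> / 2) * exp 0)"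
    using e by (intro tendsto_intros) auto
  have ev2: "\<forall>\<^sub>F N in sequentially. 1 / ((1 + \<eta> / 2) * exp (- 2 * \<beta> / real N)) < \<theta>"
    using order_tendstoD(2)[OF lim2, of \<theta>] th unfolding \<theta>0_def by auto
  define L where "L N = nat \<lfloor>real N * d / 4\<rfloor>" for N
  have L1: "real (L N) \<le> real N * d / 4" for N
  proof -
    have "real N * d / 4 \<ge> 0" using d by simp
    then show ?thesis unfolding L_def
      by (simp add: of_nat_nat) (use of_int_floor_le[of "real N * d / 4"] in linarith)
  qed
  have L2: "real (L N) \<ge> real N * d / 4 - 1" for N
  proof -
    have "real N * d / 4 \<ge> 0" using d by simp
    then show ?thesis unfolding L_def by (simp add: of_nat_nat)
  qed
  define ee where "ee N = (if h > 0 then exp (- h * real N * y0) else 0)" for N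
  define c where "c N = \<theta> ^ L N + ee N" for N
  have cnn: "\<forall>N. c N \<ge> 0" using th by (simp add: c_def ee_def)
  let ?\<kappa> = "\<theta> powr (d / 4)"
  have k: "0 < ?\<kappa>" "?\<kappa> < 1" using th d by (auto intro: powr_less_mono2[where x=\<theta> and y=1, simplified])
  have limA: "(\<lambda>N. (real N + 1) * \<theta> ^ L N) \<longlonglongrightarrow> 0"
  proof (rule tendsto_sandwich[where f="\<lambda>_. 0" and h="\<lambda>N. (1 / \<theta>) * ((real N + 1) * ?\<kappa> ^ N)"])
    show "\<forall>\<^sub>F N in sequentially. 0 \<le> (real N + 1) * \<theta> ^ L N" using th by simp
    show "\<forall>\<^sub>F N in sequentially. (real N + 1) * \<theta> ^ L N \<le> 1 / \<theta> * ((real N + 1) * ?\<kappa> ^ N)"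
    proof (intro always_eventually allI)
      fix N
      have "\<theta> ^ L N \<le> ?\<kappa> ^ N / \<theta>" by (rule theta_pow_bound[OF th(1,2) d L2])
      then have "(real N + 1) * \<theta> ^ L N \<le> (real N + 1) * (?\<kappa> ^ N / \<theta>)" by (intro mult_left_mono) auto
      then show "(real N + 1) * \<theta> ^ L N \<le> 1 / \<theta> * ((real N + 1) * ?\<kappa> ^ N)" by simp
    qed
    show "(\<lambda>N. 0) \<longlonglongrightarrow> (0::real)" by simp
    have "(\<lambda>N. (1 / \<theta>) * ((real N + 1) * ?\<kappa> ^ N)) \<longlonglongrightarrow> (1 / \<theta>) * 0"
      by (intro tendsto_mult tendsto_const nq_lim k)
    then show "(\<lambda>N. 1 / \<theta> * ((real N + 1) * ?\<kappa> ^ N)) \<longlonglongrightarrow> 0" by simp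
  qed
  have limB: "(\<lambda>N. (real N + 1) * ee N) \<longlonglongrightarrow> 0"
  proof (cases "h > 0")
    case True
    then have y0p: "y0 > 0" using hp by simp
    have "ee N = exp (- h * y0) ^ N" for N
      using True unfolding ee_def by (simp add: exp_of_nat_mult[symmetric] algebra_simps)
    moreover have "(\<lambda>N. (real N + 1) * exp (- h * y0) ^ N) \<longlonglongrightarrow> 0"
      using True y0p by (intro nq_lim) (auto simp: mult_pos_pos)
    ultimately show ?thesis by simp
  next
    case False then show ?thesis by (simp add: ee_def)
  qed
  have lim: "(\<lambda>N. (real N + 1) * c N) \<longlonglongrightarrow> 0"
    using tendsto_add[OF limA limB] by (simp add: c_def distrib_left)
  have ev: "\<forall>\<^sub>F N in sequentially. \<forall>j\<le>N. \<bar>xx N j - y0\<bar> > d \<longrightarrow> aa \<beta> h N j \<le> c N * (\<Sum>k\<le>N. aa \<beta> h N k)"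
    using ev1 ev2 eventually_gt_at_top[of "0::nat"]
  proof eventually_elim
    case (elim N)
    show ?case
    proof (intro allI impI)
      fix j assume "j \<le> N" "\<bar>xx N j - y0\<bar> > d"
      then show "aa \<beta> h N j \<le> c N * (\<Sum>k\<le>N. aa \<beta> h N k)"
        unfolding c_def ee_def
        by (rule bad_bound[OF b h y0 h0 d ds e th(1) lo up elim(3) elim(1) elim(2) L1])
    qed
  qed
  show ?thesis using lim cnn ev by blast
qed

lemma conc_mean:
  assumes b: "\<beta> > 0" and h: "h \<ge> 0" and y0: "0 \<le> y0" "y0 < 1"
    and pos: "\<forall>y. 0 \<le> y \<and> y < y0 \<longrightarrow> TT \<beta> h y > 0"
    and neg: "\<forall>y. y > y0 \<longrightarrow> TT \<beta> h y < 0"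
    and h0: "h = 0 \<longrightarrow> y0 = 0" and hp: "h > 0 \<longrightarrow> y0 > 0"
  shows "(\<lambda>N. (\<Sum>j\<le>N. aa \<beta> h N j * \<bar>xx N j - y0\<bar>) / (\<Sum>j\<le>N. aa \<beta> h N j)) \<longlonglongrightarrow> 0"
proof (rule LIMSEQ_I)
  fix r :: real assume r: "r > 0"
  define d where "d = min (r / 2) (if h > 0 then y0 / 2 else 1)"
  have d: "d > 0" using r hp by (auto simp: d_def)
  have ds: "h > 0 \<longrightarrow> d \<le> y0 / 2" by (auto simp: d_def)
  have dr: "d \<le> r / 2" by (simp add: d_def)
  obtain c where lim: "(\<lambda>N. (real N + 1) * c N) \<longlonglongrightarrow> 0" and cnn: "\<forall>N. c N \<ge> 0"
    and ev: "\<forall>\<^sub>F N in sequentially. \<forall>j\<le>N. \<bar>xx N j - y0\<bar> > d \<longrightarrow> aa \<beta> h N j \<le> c N * (\<Sum>k\<le>N. aa \<beta> h N k)"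
    using tail_bound[OF b h y0 pos neg h0 hp d ds] by blast
  have ev2: "\<forall>\<^sub>F N in sequentially. (real N + 1) * c N < r / 4"
    using order_tendstoD(2)[OF lim, of "r / 4"] r by simp
  have "\<forall>\<^sub>F N in sequentially. norm ((\<Sum>j\<le>N. aa \<beta> h N j * \<bar>xx N j - y0\<bar>) / (\<Sum>j\<le>N. aa \<beta> h N j) - 0) < r"
    using ev ev2 eventually_gt_at_top[of "0::nat"]
  proof eventually_elim
    case (elim N)
    let ?S = "\<Sum>k\<le>N. aa \<beta> h N k"
    have Sp: "?S > 0" by (rule total_pos)
    have pt: "aa \<beta> h N j * \<bar>xx N j - y0\<bar> \<le> d * aa \<beta> h N j + 2 * c N * ?S" if j: "j \<le> N" for j
    proof -
      have xb: "\<bar>xx N j - y0\<bar> \<le> 2" using xx_bounds[OF j elim(3)] y0 by linarith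
      have an: "aa \<beta> h N j \<ge> 0" by (rule aa_nonneg)
      have cS: "c N * ?S \<ge> 0" using cnn Sp by simp
      show ?thesis
      proof (cases "\<bar>xx N j - y0\<bar> > d")
        case True
        have "aa \<beta> h N j * \<bar>xx N j - y0\<bar> \<le> aa \<beta> h N j * 2" using xb an by (intro mult_left_mono) auto
        also have "\<dots> \<le> 2 * (c N * ?S)" using elim(1) j True by simp
        finally show ?thesis using d an by (simp add: mult.assoc) (smt (verit) mult_nonneg_nonneg)
      next
        case False
        then have "aa \<beta> h N j * \<bar>xx N j - y0\<bar> \<le> aa \<beta> h N j * d" using an by (intro mult_left_mono) auto
        then show ?thesis using cS by (simp add: mult.commute mult.assoc)
      qed
    qed
    have "(\<Sum>j\<le>N. aa \<beta> h N j * \<bar>xx N j - y0\<bar>) \<le> (\<Sum>j\<le>N. d * aa \<beta> h N j + 2 * c N * ?S)"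
      using pt by (intro sum_mono) auto
    also have "\<dots> = d * ?S + (real N + 1) * (2 * c N * ?S)"
      by (simp add: sum.distrib sum_distrib_left add.commute)
    finally have "(\<Sum>j\<le>N. aa \<beta> h N j * \<bar>xx N j - y0\<bar>) / ?S \<le> (d * ?S + (real N + 1) * (2 * c N * ?S)) / ?S"
      using Sp by (simp add: divide_right_mono)
    also have "\<dots> = d + 2 * ((real N + 1) * c N)" using Sp by (simp add: field_simps)
    also have "\<dots> < r" using dr elim(2) by linarith
    finally have up: "(\<Sum>j\<le>N. aa \<beta> h N j * \<bar>xx N j - y0\<bar>) / ?S < r" .
    have "0 \<le> (\<Sum>j\<le>N. aa \<beta> h N j * \<bar>xx N j - y0\<bar>) / ?S"
      using Sp aa_nonneg by (intro divide_nonneg_pos sum_nonneg mult_nonneg_nonneg) auto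
    then show ?case using up by simp
  qed
  then obtain no where "\<forall>N\<ge>no. norm ((\<Sum>j\<le>N. aa \<beta> h N j * \<bar>xx N j - y0\<bar>) / (\<Sum>j\<le>N. aa \<beta> h N j) - 0) < r"
    by (auto simp: eventually_sequentially)
  then show "\<exists>no. \<forall>n\<ge>no. norm ((\<Sum>j\<le>n. aa \<beta> h n j * \<bar>xx n j - y0\<bar>) / (\<Sum>j\<le>n. aa \<beta> h n j) - 0) < r" by blast
qed

lemma aa_neg: "j \<le> N \<Longrightarrow> aa \<beta> (- h) N (N - j) = aa \<beta> h N j"
proof -
  assume j: "j \<le> N"
  have c: "N choose (N - j) = N choose j" using binomial_symmetric[OF j] by simp
  have k: "2 * real (N - j) - real N = - (2 * real j - real N)" using j by (simp add: of_nat_diff)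
  have Wn: "W \<beta> (- h) N (- x) = W \<beta> h N x" for x by (simp add: W_def)
  have "aa \<beta> (- h) N (N - j) = real (N choose j) * W \<beta> (- h) N (- (2 * real j - real N))"
    by (simp only: aa_def c k)
  also have "\<dots> = aa \<beta> h N j" by (simp only: Wn aa_def)
  finally show ?thesis .
qed

lemma flip_sum: "(\<Sum>j\<le>N. aa \<beta> h N j * g (xx N j)) = (\<Sum>j\<le>N. aa \<beta> (- h) N j * g (- xx N j))"
proof -
  have "(\<Sum>j\<le>N. aa \<beta> (- h) N j * g (- xx N j)) = (\<Sum>j\<in>{0..N}. aa \<beta> (- h) N j * g (- xx N j))"
    by (simp add: atMost_atLeast0)
  also have "\<dots> = (\<Sum>j\<in>{0..N}. aa \<beta> (- h) N (N + 0 - j) * g (- xx N (N + 0 - j)))"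
    by (rule sum.atLeastAtMost_rev)
  also have "\<dots> = (\<Sum>j\<in>{0..N}. aa \<beta> h N j * g (xx N j))"
    by (intro sum.cong refl) (simp add: aa_neg xx_refl)
  finally show ?thesis by (simp add: atMost_atLeast0)
qed

lemma pos_case:
  assumes b: "\<beta> > 0" and h: "h \<ge> 0" and c: "h > 0 \<or> \<beta> \<le> 1"
  shows "\<exists>y0. 0 \<le> y0 \<and> y0 < 1 \<and> (\<forall>x. x \<noteq> y0 \<longrightarrow> phi \<beta> h x < phi \<beta> h y0) \<and>
     (\<lambda>N. (\<Sum>j\<le>N. aa \<beta> h N j * \<bar>xx N j - y0\<bar>) / (\<Sum>j\<le>N. aa \<beta> h N j)) \<longlonglongrightarrow> 0"
proof -
  obtain y0 where y0: "0 \<le> y0" "y0 < 1" "TT \<beta> h y0 = 0"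
    and pos: "\<forall>y. 0 \<le> y \<and> y < y0 \<longrightarrow> TT \<beta> h y > 0"
    and neg: "\<forall>y. y > y0 \<longrightarrow> TT \<beta> h y < 0" and h0: "h = 0 \<longrightarrow> y0 = 0"
    using TT_root[OF b h c] by blast
  have hp: "h > 0 \<longrightarrow> y0 > 0"
  proof
    assume hp: "h > 0"
    show "y0 > 0"
    proof (rule ccontr)
      assume "\<not> y0 > 0" then have "y0 = 0" using y0 by simp
      then have "tanh h = 0" using y0(3) by (simp add: TT_def)
      then show False using hp by simp
    qed
  qed
  have st: "\<forall>x. x \<noteq> y0 \<longrightarrow> phi \<beta> h x < phi \<beta> h y0"
    using phi_strict[OF b h y0(1) y0(3) pos neg h0] by blast
  show ?thesis using conc_mean[OF b h y0(1,2) pos neg h0 hp] st y0 by blast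
qed

lemma conc_all:
  assumes b: "\<beta> > 0" and c: "h \<noteq> 0 \<or> \<beta> \<le> 1"
  shows "\<bar>m0 \<beta> h\<bar> \<le> 1 \<and> (\<lambda>N. (\<Sum>j\<le>N. aa \<beta> h N j * \<bar>xx N j - m0 \<beta> h\<bar>) / (\<Sum>j\<le>N. aa \<beta> h N j)) \<longlonglongrightarrow> 0"
proof (cases "h \<ge> 0")
  case True
  have c': "h > 0 \<or> \<beta> \<le> 1" using c True by auto
  obtain y0 where y0: "0 \<le> y0" "y0 < 1" "\<forall>x. x \<noteq> y0 \<longrightarrow> phi \<beta> h x < phi \<beta> h y0"
    and lim: "(\<lambda>N. (\<Sum>j\<le>N. aa \<beta> h N j * \<bar>xx N j - y0\<bar>) / (\<Sum>j\<le>N. aa \<beta> h N j)) \<longlonglongrightarrow> 0"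
    using pos_case[OF b True c'] by blast
  have "m0 \<beta> h = y0" using y0(3) by (intro m0_eq) auto
  then show ?thesis using y0 lim by simp
next
  case False
  have c': "- h > 0 \<or> \<beta> \<le> 1" using False by auto
  have hn: "- h \<ge> 0" using False by simp
  obtain y0 where y0: "0 \<le> y0" "y0 < 1" "\<forall>x. x \<noteq> y0 \<longrightarrow> phi \<beta> (- h) x < phi \<beta> (- h) y0"
    and lim: "(\<lambda>N. (\<Sum>j\<le>N. aa \<beta> (- h) N j * \<bar>xx N j - y0\<bar>) / (\<Sum>j\<le>N. aa \<beta> (- h) N j)) \<longlonglongrightarrow> 0"
    using pos_case[OF b hn c'] by blast
  have pf: "phi \<beta> h x = phi \<beta> (- h) (- x)" for x using phi_flip[of \<beta> "- h" x] by simp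
  have "m0 \<beta> h = - y0"
  proof (rule m0_eq)
    fix x assume "x \<noteq> - y0"
    then have "- x \<noteq> y0" by auto
    then show "phi \<beta> h x < phi \<beta> h (- y0)" using y0(3) pf by simp
  qed
  moreover have "(\<Sum>j\<le>N. aa \<beta> h N j * \<bar>xx N j - - y0\<bar>) = (\<Sum>j\<le>N. aa \<beta> (- h) N j * \<bar>xx N j - y0\<bar>)" for N
    using flip_sum[of \<beta> h N "\<lambda>x. \<bar>x + y0\<bar>"] by (simp add: abs_minus_commute)
  moreover have "(\<Sum>j\<le>N. aa \<beta> h N j) = (\<Sum>j\<le>N. aa \<beta> (- h) N j)" for N
    using flip_sum[of \<beta> h N "\<lambda>x. 1"] by simp
  ultimately show ?thesis using y0 lim by simp
qed

lemma EE_fun_sum: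
  "EE \<beta> h N (\<lambda>s. g (\<Sum>i<N. s i)) = (\<Sum>j\<le>N. aa \<beta> h N j * g (2 * real j - real N)) / (\<Sum>j\<le>N. aa \<beta> h N j)"
proof -
  have "(\<Sum>s\<in>spin_configs N. cw_weight \<beta> h N s * g (\<Sum>i<N. s i))
      = (\<Sum>s\<in>spin_configs N. W \<beta> h N (\<Sum>i<N. s i) * g (\<Sum>i<N. s i))"
    by (intro sum.cong refl) (simp add: weight_eq)
  also have "\<dots> = (\<Sum>j\<le>N. aa \<beta> h N j * g (2 * real j - real N))"
    by (subst group_sum) (simp add: aa_def mult.assoc)
  finally have n: "(\<Sum>s\<in>spin_configs N. cw_weight \<beta> h N s * g (\<Sum>i<N. s i)) = (\<Sum>j\<le>N. aa \<beta> h N j * g (2 * real j - real N))" .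
  have "cw_Z \<beta> h N = (\<Sum>s\<in>spin_configs N. W \<beta> h N (\<Sum>i<N. s i))"
    unfolding cw_Z_def by (intro sum.cong refl) (simp add: weight_eq)
  also have "\<dots> = (\<Sum>j\<le>N. aa \<beta> h N j)"
    by (subst group_sum) (simp add: aa_def)
  finally show ?thesis using n by (simp add: EE_def)
qed

lemma EE_absdev:
  assumes b: "\<beta> > 0" and c: "h \<noteq> 0 \<or> \<beta> \<le> 1"
  shows "(\<lambda>N. EE \<beta> h N (\<lambda>s. \<bar>mag N s - m0 \<beta> h\<bar>)) \<longlonglongrightarrow> 0"
proof -
  have "EE \<beta> h N (\<lambda>s. \<bar>mag N s - m0 \<beta> h\<bar>) = (\<Sum>j\<le>N. aa \<beta> h N j * \<bar>xx N j - m0 \<beta> h\<bar>) / (\<Sum>j\<le>N. aa \<beta> h N j)" for N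
    using EE_fun_sum[of \<beta> h N "\<lambda>k. \<bar>k / real N - m0 \<beta> h\<bar>"] by (simp add: mag_def xx_def)
  then show ?thesis using conc_all[OF b c] by simp
qed

lemma mag_abs: "s \<in> spin_configs N \<Longrightarrow> \<bar>mag N s\<bar> \<le> 1"
proof -
  assume s: "s \<in> spin_configs N"
  have "\<bar>\<Sum>i<N. s i\<bar> \<le> (\<Sum>i<N. \<bar>s i\<bar>)" by (rule sum_abs)
  also have "\<dots> = (\<Sum>i<N. 1)" using s by (intro sum.cong refl) (auto simp: spin_configs_def)
  finally have "\<bar>\<Sum>i<N. s i\<bar> \<le> real N" by simp
  then show ?thesis by (cases "N = 0") (auto simp: mag_def divide_le_eq)
qed

lemma inv_lim: "(\<lambda>N. 1 / (real N - 1)) \<longlonglongrightarrow> 0"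
proof (rule Lim_null_comparison)
  show "\<forall>\<^sub>F N in sequentially. norm (1 / (real N - 1)) \<le> 2 / real N"
    using eventually_ge_at_top[of "2::nat"]
  proof eventually_elim
    case (elim N)
    then have "real N \<ge> 2" by simp
    then show ?case by (simp add: divide_simps)
  qed
  show "(\<lambda>N. 2 / real N) \<longlonglongrightarrow> 0" by (rule lim_const_over_n)
qed

lemma lims:
  assumes b: "\<beta> > 0" and c: "h \<noteq> 0 \<or> \<beta> \<le> 1"
  shows "(\<lambda>N. EE \<beta> h N (\<lambda>s. s 0)) \<longlonglongrightarrow> m0 \<beta> h"
    and "(\<lambda>N. EE \<beta> h N (\<lambda>s. s 0 * s 1)) \<longlonglongrightarrow> (m0 \<beta> h)^2"
proof -
  let ?m = "m0 \<beta> h"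
  have m1: "\<bar>?m\<bar> \<le> 1" using conc_all[OF b c] by simp
  have D: "(\<lambda>N. EE \<beta> h N (\<lambda>s. \<bar>mag N s - ?m\<bar>)) \<longlonglongrightarrow> 0" by (rule EE_absdev[OF b c])
  have "(\<lambda>N. EE \<beta> h N (mag N) - ?m) \<longlonglongrightarrow> 0"
  proof (rule Lim_null_comparison[OF always_eventually D])
    show "\<forall>N. norm (EE \<beta> h N (mag N) - ?m) \<le> EE \<beta> h N (\<lambda>s. \<bar>mag N s - ?m\<bar>)"
    proof
      fix N
      have "EE \<beta> h N (mag N) - ?m = EE \<beta> h N (\<lambda>s. mag N s - ?m)" by (simp add: EE_diff EE_const)
      then show "norm (EE \<beta> h N (mag N) - ?m) \<le> EE \<beta> h N (\<lambda>s. \<bar>mag N s - ?m\<bar>)" using EE_abs by simp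
    qed
  qed
  then have M1: "(\<lambda>N. EE \<beta> h N (mag N)) \<longlonglongrightarrow> ?m" by (simp add: LIM_zero_iff)
  have evm: "\<forall>\<^sub>F N in sequentially. EE \<beta> h N (mag N) = EE \<beta> h N (\<lambda>s. s 0)"
    using eventually_gt_at_top[of "0::nat"] by eventually_elim (rule EE_mag)
  show "(\<lambda>N. EE \<beta> h N (\<lambda>s. s 0)) \<longlonglongrightarrow> ?m"
    using tendsto_cong[OF evm] M1 by simp
  have D2: "(\<lambda>N. 2 * EE \<beta> h N (\<lambda>s. \<bar>mag N s - ?m\<bar>)) \<longlonglongrightarrow> 0" using tendsto_mult_right_zero[OF D, of 2] by simp
  have "(\<lambda>N. EE \<beta> h N (\<lambda>s. (mag N s)^2) - ?m^2) \<longlonglongrightarrow> 0"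
  proof (rule Lim_null_comparison[OF always_eventually D2])
    show "\<forall>N. norm (EE \<beta> h N (\<lambda>s. (mag N s)^2) - ?m^2) \<le> 2 * EE \<beta> h N (\<lambda>s. \<bar>mag N s - ?m\<bar>)"
    proof
      fix N
      have "EE \<beta> h N (\<lambda>s. (mag N s)^2) - ?m^2 = EE \<beta> h N (\<lambda>s. (mag N s)^2 - ?m^2)" by (simp add: EE_diff EE_const)
      also have "\<bar>\<dots>\<bar> \<le> EE \<beta> h N (\<lambda>s. \<bar>(mag N s)^2 - ?m^2\<bar>)" by (rule EE_abs)
      also have "\<dots> \<le> EE \<beta> h N (\<lambda>s. 2 * \<bar>mag N s - ?m\<bar>)"
      proof (rule EE_mono)
        fix s assume s: "s \<in> spin_configs N"
        have "\<bar>(mag N s)^2 - ?m^2\<bar> = \<bar>mag N s - ?m\<bar> * \<bar>mag N s + ?m\<bar>"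
          by (simp add: power2_eq_square abs_mult[symmetric] algebra_simps)
        also have "\<dots> \<le> \<bar>mag N s - ?m\<bar> * 2"
          using mag_abs[OF s] m1 by (intro mult_left_mono) auto
        finally show "\<bar>(mag N s)^2 - ?m^2\<bar> \<le> 2 * \<bar>mag N s - ?m\<bar>" by simp
      qed
      also have "\<dots> = 2 * EE \<beta> h N (\<lambda>s. \<bar>mag N s - ?m\<bar>)" by (rule EE_cmult)
      finally show "norm (EE \<beta> h N (\<lambda>s. (mag N s)^2) - ?m^2) \<le> 2 * EE \<beta> h N (\<lambda>s. \<bar>mag N s - ?m\<bar>)" by simp
    qed
  qed
  then have A: "(\<lambda>N. EE \<beta> h N (\<lambda>s. (mag N s)^2)) \<longlonglongrightarrow> ?m^2" by (simp add: LIM_zero_iff)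
  let ?A = "\<lambda>N. EE \<beta> h N (\<lambda>s. (mag N s)^2)"
  have lim: "(\<lambda>N. ?A N + (?A N - 1) * (1 / (real N - 1))) \<longlonglongrightarrow> ?m^2 + (?m^2 - 1) * 0"
    by (intro tendsto_intros A inv_lim)
  have ev: "\<forall>\<^sub>F N in sequentially. ?A N + (?A N - 1) * (1 / (real N - 1)) = EE \<beta> h N (\<lambda>s. s 0 * s 1)"
    using eventually_ge_at_top[of "2::nat"]
  proof eventually_elim
    case (elim N)
    then have N: "N > 0" "real N - 1 > 0" by auto
    have e: "?A N = 1 / real N + (real N - 1) / real N * EE \<beta> h N (\<lambda>s. s 0 * s 1)" by (rule EE_mag2[OF N(1)])
    show ?case unfolding e using N by (simp add: field_simps)
  qed
  show "(\<lambda>N. EE \<beta> h N (\<lambda>s. s 0 * s 1)) \<longlonglongrightarrow> ?m^2"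
    using tendsto_cong[OF ev] lim by simp
qed

definition EM :: "real \<Rightarrow> ('m::finite \<Rightarrow> real) \<Rightarrow> nat \<Rightarrow> (('m \<Rightarrow> nat \<Rightarrow> real) \<Rightarrow> real) \<Rightarrow> real" where
  "EM \<beta> hv N f = (\<Sum>S\<in>multi_configs N. cw_prob \<beta> hv N S * f S)"

lemma multi_eq: "multi_configs N = PiE UNIV (\<lambda>_. spin_configs N)"
  by (simp add: multi_configs_def PiE_UNIV_domain Pi_def)

lemma finite_multi: "finite (multi_configs N :: (('m::finite) \<Rightarrow> nat \<Rightarrow> real) set)"
  unfolding multi_eq by (intro finite_PiE) auto

lemma cw_prob_nonneg: "cw_prob \<beta> hv N S \<ge> 0"
  unfolding cw_prob_def using Z_pos weight_pos by (intro prod_nonneg) (auto intro: less_imp_le)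

lemma EM_prod:
  "EM \<beta> (hv :: 'm::finite \<Rightarrow> real) N (\<lambda>S. \<Prod>\<mu>\<in>UNIV. f \<mu> (S \<mu>)) = (\<Prod>\<mu>\<in>UNIV. EE \<beta> (hv \<mu>) N (f \<mu>))"
proof -
  have "(\<Prod>\<mu>\<in>UNIV. EE \<beta> (hv \<mu>) N (f \<mu>))
      = (\<Prod>\<mu>\<in>UNIV. \<Sum>x\<in>spin_configs N. cw_weight \<beta> (hv \<mu>) N x / cw_Z \<beta> (hv \<mu>) N * f \<mu> x)"
    by (simp add: EE_def sum_divide_distrib)
  also have "\<dots> = (\<Sum>S\<in>PiE UNIV (\<lambda>_. spin_configs N). \<Prod>\<mu>\<in>UNIV. cw_weight \<beta> (hv \<mu>) N (S \<mu>) / cw_Z \<beta> (hv \<mu>) N * f \<mu> (S \<mu>))"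
    by (rule prod_sum_PiE) auto
  also have "\<dots> = (\<Sum>S\<in>PiE UNIV (\<lambda>_. spin_configs N). (\<Prod>\<mu>\<in>UNIV. cw_weight \<beta> (hv \<mu>) N (S \<mu>) / cw_Z \<beta> (hv \<mu>) N) * (\<Prod>\<mu>\<in>UNIV. f \<mu> (S \<mu>)))"
    by (simp only: prod.distrib)
  also have "\<dots> = EM \<beta> hv N (\<lambda>S. \<Prod>\<mu>\<in>UNIV. f \<mu> (S \<mu>))"
    unfolding EM_def multi_eq cw_prob_def ..
  finally show ?thesis by simp
qed

lemma EM_const: "EM \<beta> (hv :: 'm::finite \<Rightarrow> real) N (\<lambda>S. c) = c"
proof -
  have "EM \<beta> hv N (\<lambda>S. \<Prod>\<mu>\<in>(UNIV::'m set). (\<lambda>\<mu> x. 1) \<mu> (S \<mu>)) = (\<Prod>\<mu>\<in>(UNIV::'m set). EE \<beta> (hv \<mu>) N (\<lambda>x. 1))"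
    by (rule EM_prod)
  then have one: "(\<Sum>S\<in>multi_configs N. cw_prob \<beta> hv N S) = 1" by (simp add: EM_def EE_const)
  show ?thesis unfolding EM_def using one by (simp add: sum_distrib_right[symmetric])
qed

lemma EM_add: "EM \<beta> hv N (\<lambda>S. f S + g S) = EM \<beta> hv N f + EM \<beta> hv N g"
  by (simp add: EM_def distrib_left sum.distrib)

lemma EM_diff: "EM \<beta> hv N (\<lambda>S. f S - g S) = EM \<beta> hv N f - EM \<beta> hv N g"
  by (simp add: EM_def right_diff_distrib sum_subtractf)

lemma EM_cmult: "EM \<beta> hv N (\<lambda>S. c * f S) = c * EM \<beta> hv N f"
  by (simp add: EM_def sum_distrib_left mult.left_commute)

lemma EM_sum: "finite I \<Longrightarrow> EM \<beta> hv N (\<lambda>S. \<Sum>i\<in>I. f i S) = (\<Sum>i\<in>I. EM \<beta> hv N (f i))"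
  by (simp add: EM_def sum_distrib_left sum.swap[of _ I])

lemma EE_cong: "(\<And>s. s \<in> spin_configs N \<Longrightarrow> f s = g s) \<Longrightarrow> EE \<beta> h N f = EE \<beta> h N g"
  unfolding EE_def by (intro arg_cong2[where f="(/)"] sum.cong refl) auto

definition ff :: "nat \<Rightarrow> ('m::finite \<Rightarrow> real) \<Rightarrow> ('m \<Rightarrow> nat \<Rightarrow> real) \<Rightarrow> real" where
  "ff N s S = (1 / real N) * (\<Sum>i<N. \<Prod>\<mu>\<in>UNIV. (1 + s \<mu> * S \<mu> i) / 2)"

lemma EE_half: "EE \<beta> h N (\<lambda>x. (1 + a * f x) / 2) = (1 + a * EE \<beta> h N f) / 2"
proof -
  have e: "(\<lambda>x. (1 + a * f x) / 2) = (\<lambda>x. 1 / 2 + (a / 2) * f x)" by (auto simp: fun_eq_iff field_simps)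
  show ?thesis unfolding e by (simp only: EE_add EE_const EE_cmult) (simp add: field_simps)
qed

lemma EE_quarter: "EE \<beta> h N (\<lambda>x. (1 + a * f x + a * g x + k x) / 4) = (1 + a * EE \<beta> h N f + a * EE \<beta> h N g + EE \<beta> h N k) / 4"
proof -
  have "(\<lambda>x. (1 + a * f x + a * g x + k x) / 4) = (\<lambda>x. 1 / 4 + ((a / 4) * f x + ((a / 4) * g x + (1 / 4) * k x)))"
    by (auto simp: fun_eq_iff field_simps)
  then show ?thesis by (simp only: EE_add EE_const EE_cmult) (simp add: field_simps)
qed

lemma sq_pm: "x \<in> {-1, 1::real} \<Longrightarrow> x * x = 1" by auto

lemma E_ff:
  assumes N: "N > 0"
  shows "EM \<beta> hv N (ff N s) = (\<Prod>\<mu>\<in>UNIV. (1 + s \<mu> * EE \<beta> (hv \<mu>) N (\<lambda>x. x 0)) / 2)"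
proof -
  have "EM \<beta> hv N (ff N s) = EM \<beta> hv N (\<lambda>S. (1 / real N) * (\<Sum>i<N. \<Prod>\<mu>\<in>UNIV. (1 + s \<mu> * S \<mu> i) / 2))"
    unfolding ff_def ..
  also have "\<dots> = (1 / real N) * (\<Sum>i<N. \<Prod>\<mu>\<in>UNIV. EE \<beta> (hv \<mu>) N (\<lambda>x. (1 + s \<mu> * x i) / 2))"
  proof -
    have "EM \<beta> hv N (\<lambda>S. (1 / real N) * (\<Sum>i<N. \<Prod>\<mu>\<in>UNIV. (1 + s \<mu> * S \<mu> i) / 2))
        = (1 / real N) * (\<Sum>i<N. EM \<beta> hv N (\<lambda>S. \<Prod>\<mu>\<in>UNIV. (1 + s \<mu> * S \<mu> i) / 2))"
      by (simp only: EM_cmult EM_sum[OF finite_lessThan])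
    also have "\<dots> = (1 / real N) * (\<Sum>i<N. \<Prod>\<mu>\<in>UNIV. EE \<beta> (hv \<mu>) N (\<lambda>x. (1 + s \<mu> * x i) / 2))"
      using EM_prod[of \<beta> hv N "\<lambda>\<mu> x. (1 + s \<mu> * x _) / 2"] by simp
    finally show ?thesis .
  qed
  also have "\<dots> = (1 / real N) * (\<Sum>i<N. \<Prod>\<mu>\<in>UNIV. (1 + s \<mu> * EE \<beta> (hv \<mu>) N (\<lambda>x. x 0)) / 2)"
  proof -
    have fe: "EE \<beta> (hv \<mu>) N (\<lambda>x. (1 + s \<mu> * x i) / 2) = (1 + s \<mu> * EE \<beta> (hv \<mu>) N (\<lambda>x. x 0)) / 2" if "i < N" for i \<mu>
      using EE_half[of \<beta> "hv \<mu>" N "s \<mu>" "\<lambda>x. x i"] EE_site[OF that, of \<beta> "hv \<mu>"] by simp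
    show ?thesis
      by (rule arg_cong[where f="\<lambda>t. (1 / real N) * t"], rule sum.cong[OF refl], rule prod.cong[OF refl]) (simp add: fe)
  qed
  also have "\<dots> = (\<Prod>\<mu>\<in>UNIV. (1 + s \<mu> * EE \<beta> (hv \<mu>) N (\<lambda>x. x 0)) / 2)" using N by simp
  finally show ?thesis .
qed

lemma dsum: "(\<Sum>i<N. \<Sum>j<N. if i = j then a else b) = real N * a + real N * (real N - 1) * (b::real)"
proof -
  have "(\<Sum>j<N. if i = j then a else b) = a + (real N - 1) * b" if i: "i < N" for i
  proof -
    have "(\<Sum>j<N. if i = j then a else b) = (\<Sum>j\<in>{..<N}. (if j = i then a - b else 0) + b)"
      by (intro sum.cong refl) auto
    also have "\<dots> = a - b + real N * b" using i by (simp add: sum.distrib)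
    finally show ?thesis by (simp add: algebra_simps)
  qed
  then have "(\<Sum>i<N. \<Sum>j<N. if i = j then a else b) = (\<Sum>i<N. a + (real N - 1) * b)" by simp
  then show ?thesis by (simp add: algebra_simps)
qed

lemma EE_pairprod:
  assumes a: "a \<in> {-1, 1}" and i: "i < N" and j: "j < N"
  shows "EE \<beta> h N (\<lambda>x. (1 + a * x i) / 2 * ((1 + a * x j) / 2))
       = (if i = j then (1 + a * EE \<beta> h N (\<lambda>x. x 0)) / 2 else (1 + 2 * a * EE \<beta> h N (\<lambda>x. x 0) + EE \<beta> h N (\<lambda>x. x 0 * x 1)) / 4)"
proof (cases "i = j")
  case True
  have "EE \<beta> h N (\<lambda>x. (1 + a * x i) / 2 * ((1 + a * x j) / 2)) = EE \<beta> h N (\<lambda>x. (1 + a * x i) / 2)"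
  proof (rule EE_cong)
    fix x assume x: "x \<in> spin_configs N"
    have "x i * x i = 1" by (rule spin_sq[OF x i])
    moreover have "a * a = 1" using a by auto
    ultimately show "(1 + a * x i) / 2 * ((1 + a * x j) / 2) = (1 + a * x i) / 2"
      using True by (simp add: algebra_simps)
  qed
  also have "\<dots> = (1 + a * EE \<beta> h N (\<lambda>x. x i)) / 2" by (rule EE_half)
  finally show ?thesis using True EE_site[OF i, of \<beta> h] by simp
next
  case False
  have "EE \<beta> h N (\<lambda>x. (1 + a * x i) / 2 * ((1 + a * x j) / 2)) = EE \<beta> h N (\<lambda>x. (1 + a * x i + a * x j + x i * x j) / 4)"
  proof (rule EE_cong)
    fix x assume x: "x \<in> spin_configs N"
    have "a * a = 1" using a by auto
    then show "(1 + a * x i) / 2 * ((1 + a * x j) / 2) = (1 + a * x i + a * x j + x i * x j) / 4"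
      by (simp add: algebra_simps)
  qed
  also have "\<dots> = (1 + a * EE \<beta> h N (\<lambda>x. x i) + a * EE \<beta> h N (\<lambda>x. x j) + EE \<beta> h N (\<lambda>x. x i * x j)) / 4"
    by (rule EE_quarter)
  finally show ?thesis using False EE_site[OF i, of \<beta> h] EE_site[OF j, of \<beta> h] EE_pair[OF i j False, of \<beta> h]
    by (simp add: algebra_simps)
qed

lemma E_ff2:
  assumes N: "N > 0" and s: "s \<in> pm_vectors"
  shows "EM \<beta> hv N (\<lambda>S. (ff N s S)^2) =
    (1 / real N) * (\<Prod>\<mu>\<in>UNIV. (1 + s \<mu> * EE \<beta> (hv \<mu>) N (\<lambda>x. x 0)) / 2)
    + ((real N - 1) / real N) * (\<Prod>\<mu>\<in>UNIV. (1 + 2 * s \<mu> * EE \<beta> (hv \<mu>) N (\<lambda>x. x 0) + EE \<beta> (hv \<mu>) N (\<lambda>x. x 0 * x 1)) / 4)"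
proof -
  let ?P1 = "\<Prod>\<mu>\<in>UNIV. (1 + s \<mu> * EE \<beta> (hv \<mu>) N (\<lambda>x. x 0)) / 2"
  let ?P2 = "\<Prod>\<mu>\<in>UNIV. (1 + 2 * s \<mu> * EE \<beta> (hv \<mu>) N (\<lambda>x. x 0) + EE \<beta> (hv \<mu>) N (\<lambda>x. x 0 * x 1)) / 4"
  have sq: "(ff N s S)^2 = (1 / real N)^2 * (\<Sum>i<N. \<Sum>j<N. \<Prod>\<mu>\<in>UNIV. (1 + s \<mu> * S \<mu> i) / 2 * ((1 + s \<mu> * S \<mu> j) / 2))" for S
  proof -
    have "(ff N s S)^2 = (1 / real N)^2 * ((\<Sum>i<N. \<Prod>\<mu>\<in>UNIV. (1 + s \<mu> * S \<mu> i) / 2) * (\<Sum>j<N. \<Prod>\<mu>\<in>UNIV. (1 + s \<mu> * S \<mu> j) / 2))"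
      unfolding ff_def by (simp only: power2_eq_square mult_ac)
    also have "\<dots> = (1 / real N)^2 * (\<Sum>i<N. \<Sum>j<N. (\<Prod>\<mu>\<in>UNIV. (1 + s \<mu> * S \<mu> i) / 2) * (\<Prod>\<mu>\<in>UNIV. (1 + s \<mu> * S \<mu> j) / 2))"
      by (simp only: sum_product)
    also have "\<dots> = (1 / real N)^2 * (\<Sum>i<N. \<Sum>j<N. \<Prod>\<mu>\<in>UNIV. (1 + s \<mu> * S \<mu> i) / 2 * ((1 + s \<mu> * S \<mu> j) / 2))"
      by (simp only: prod.distrib)
    finally show ?thesis .
  qed
  have "EM \<beta> hv N (\<lambda>S. (ff N s S)^2) = (1 / real N)^2 * (\<Sum>i<N. \<Sum>j<N. EM \<beta> hv N (\<lambda>S. \<Prod>\<mu>\<in>UNIV. (1 + s \<mu> * S \<mu> i) / 2 * ((1 + s \<mu> * S \<mu> j) / 2)))"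
    unfolding sq by (simp only: EM_cmult EM_sum[OF finite_lessThan])
  also have "\<dots> = (1 / real N)^2 * (\<Sum>i<N. \<Sum>j<N. \<Prod>\<mu>\<in>UNIV. EE \<beta> (hv \<mu>) N (\<lambda>x. (1 + s \<mu> * x i) / 2 * ((1 + s \<mu> * x j) / 2)))"
    using EM_prod[of \<beta> hv N "\<lambda>\<mu> x. (1 + s \<mu> * x _) / 2 * ((1 + s \<mu> * x _) / 2)"] by simp
  also have "\<dots> = (1 / real N)^2 * (\<Sum>i<N. \<Sum>j<N. if i = j then ?P1 else ?P2)"
  proof -
    have "(\<Prod>\<mu>\<in>UNIV. EE \<beta> (hv \<mu>) N (\<lambda>x. (1 + s \<mu> * x i) / 2 * ((1 + s \<mu> * x j) / 2))) = (if i = j then ?P1 else ?P2)"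
      if "i < N" "j < N" for i j
    proof -
      have sm: "s \<mu> \<in> {-1, 1}" for \<mu> using s by (simp add: pm_vectors_def)
      have fe: "EE \<beta> (hv \<mu>) N (\<lambda>x. (1 + s \<mu> * x i) / 2 * ((1 + s \<mu> * x j) / 2))
       = (if i = j then (1 + s \<mu> * EE \<beta> (hv \<mu>) N (\<lambda>x. x 0)) / 2 else (1 + 2 * s \<mu> * EE \<beta> (hv \<mu>) N (\<lambda>x. x 0) + EE \<beta> (hv \<mu>) N (\<lambda>x. x 0 * x 1)) / 4)" for \<mu>
        by (rule EE_pairprod[OF sm that])
      show ?thesis unfolding fe by (cases "i = j") simp_all
    qed
    then show ?thesis
      by (intro arg_cong[where f="\<lambda>t. (1 / real N)^2 * t"] sum.cong refl) auto
  qed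
  also have "\<dots> = (1 / real N)^2 * (real N * ?P1 + real N * (real N - 1) * ?P2)" by (simp only: dsum)
  also have "\<dots> = (1 / real N) * ?P1 + ((real N - 1) / real N) * ?P2"
    using N by (simp add: power2_eq_square field_simps)
  finally show ?thesis .
qed

lemma var_lim:
  assumes b: "\<beta> > 0" and c: "\<forall>\<mu>. hv \<mu> \<noteq> 0 \<or> \<beta> \<le> 1" and s: "s \<in> pm_vectors"
  shows "(\<lambda>N. EM \<beta> (hv :: 'm::finite \<Rightarrow> real) N (\<lambda>S. (ff N s S - (\<Prod>\<mu>\<in>UNIV. (1 + s \<mu> * m0 \<beta> (hv \<mu>)) / 2))^2)) \<longlonglongrightarrow> 0"
proof -
  let ?pi = "\<Prod>\<mu>\<in>(UNIV::'m set). (1 + s \<mu> * m0 \<beta> (hv \<mu>)) / 2"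
  let ?P1 = "\<lambda>N. \<Prod>\<mu>\<in>(UNIV::'m set). (1 + s \<mu> * EE \<beta> (hv \<mu>) N (\<lambda>x. x 0)) / 2"
  let ?P2 = "\<lambda>N. \<Prod>\<mu>\<in>(UNIV::'m set). (1 + 2 * s \<mu> * EE \<beta> (hv \<mu>) N (\<lambda>x. x 0) + EE \<beta> (hv \<mu>) N (\<lambda>x. x 0 * x 1)) / 4"
  have sm: "s \<mu> * s \<mu> = 1" for \<mu>
  proof -
    have "s \<mu> = - 1 \<or> s \<mu> = 1" using s by (simp add: pm_vectors_def)
    then show ?thesis by auto
  qed
  have L1: "(\<lambda>N. EE \<beta> (hv \<mu>) N (\<lambda>x. x 0)) \<longlonglongrightarrow> m0 \<beta> (hv \<mu>)" for \<mu> using lims(1)[OF b] c by blast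
  have L2: "(\<lambda>N. EE \<beta> (hv \<mu>) N (\<lambda>x. x 0 * x 1)) \<longlonglongrightarrow> (m0 \<beta> (hv \<mu>))^2" for \<mu> using lims(2)[OF b] c by blast
  have P1: "?P1 \<longlonglongrightarrow> ?pi" by (intro tendsto_intros L1) auto
  have P2: "?P2 \<longlonglongrightarrow> (\<Prod>\<mu>\<in>(UNIV::'m set). (1 + 2 * s \<mu> * m0 \<beta> (hv \<mu>) + (m0 \<beta> (hv \<mu>))^2) / 4)"
    by (intro tendsto_intros L1 L2) auto
  have Q: "(\<Prod>\<mu>\<in>(UNIV::'m set). (1 + 2 * s \<mu> * m0 \<beta> (hv \<mu>) + (m0 \<beta> (hv \<mu>))^2) / 4) = ?pi^2"
  proof -
    have "(1 + 2 * s \<mu> * m0 \<beta> (hv \<mu>) + (m0 \<beta> (hv \<mu>))^2) / 4 = ((1 + s \<mu> * m0 \<beta> (hv \<mu>)) / 2)^2" for \<mu>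
    proof -
      have "((1 + s \<mu> * m0 \<beta> (hv \<mu>)) / 2)^2 = (1 + 2 * s \<mu> * m0 \<beta> (hv \<mu>) + (s \<mu> * s \<mu>) * (m0 \<beta> (hv \<mu>))^2) / 4"
        by (simp add: power2_eq_square algebra_simps)
      then show ?thesis using sm by simp
    qed
    then show ?thesis by (simp add: prod_power_distrib)
  qed
  have lim: "(\<lambda>N. (1 / real N) * ?P1 N + (1 - 1 / real N) * ?P2 N + (- 2 * ?pi) * ?P1 N + ?pi^2) \<longlonglongrightarrow>
      0 * ?pi + (1 - 0) * ?pi^2 + (- 2 * ?pi) * ?pi + ?pi^2"
    unfolding Q[symmetric] by (intro tendsto_intros P1 P2 lim_inverse_n')
  have ev: "\<forall>\<^sub>F N in sequentially. (1 / real N) * ?P1 N + (1 - 1 / real N) * ?P2 N + (- 2 * ?pi) * ?P1 N + ?pi^2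
      = EM \<beta> hv N (\<lambda>S. (ff N s S - ?pi)^2)"
    using eventually_gt_at_top[of "0::nat"]
  proof eventually_elim
    case (elim N)
    have e: "(\<lambda>S. (ff N s S - ?pi)^2) = (\<lambda>S. (ff N s S)^2 + ((- 2 * ?pi) * ff N s S + (\<lambda>_. ?pi^2) S))"
      by (auto simp: fun_eq_iff power2_eq_square algebra_simps)
    have "EM \<beta> hv N (\<lambda>S. (ff N s S - ?pi)^2) = EM \<beta> hv N (\<lambda>S. (ff N s S)^2) + ((- 2 * ?pi) * EM \<beta> hv N (ff N s) + ?pi^2)"
      unfolding e by (simp only: EM_add EM_cmult EM_const)
    also have "\<dots> = (1 / real N) * ?P1 N + ((real N - 1) / real N) * ?P2 N + ((- 2 * ?pi) * ?P1 N + ?pi^2)"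
      by (simp only: E_ff2[OF elim s] E_ff[OF elim])
    also have "(real N - 1) / real N = 1 - 1 / real N" using elim by (simp add: field_simps)
    finally show ?case by simp
  qed
  have "0 * ?pi + (1 - 0) * ?pi^2 + (- 2 * ?pi) * ?pi + ?pi^2 = 0" by (simp add: power2_eq_square)
  then show ?thesis using tendsto_cong[OF ev] lim by simp
qed

lemma pm_eq: "(pm_vectors :: ('m::finite \<Rightarrow> real) set) = PiE UNIV (\<lambda>_. {-1, 1})"
  by (simp add: pm_vectors_def PiE_UNIV_domain Pi_def)

lemma finite_pm: "finite (pm_vectors :: ('m::finite \<Rightarrow> real) set)"
  unfolding pm_eq by (intro finite_PiE) auto

lemma card_pm_pos: "card (pm_vectors :: ('m::finite \<Rightarrow> real) set) > 0"
proof -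
  have "(\<lambda>_. 1) \<in> (pm_vectors :: ('m::finite \<Rightarrow> real) set)" by (simp add: pm_vectors_def)
  then show ?thesis using finite_pm card_gt_0_iff by blast
qed

lemma prod_ind:
  assumes s: "s \<in> pm_vectors" and t: "t \<in> pm_vectors"
  shows "(\<Prod>\<mu>\<in>(UNIV::'m::finite set). (1 + s \<mu> * t \<mu>) / 2) = (if s = t then 1 else 0)"
proof (cases "s = t")
  case True
  have "(1 + t \<mu> * t \<mu>) / 2 = 1" for \<mu>
  proof -
    have "t \<mu> = - 1 \<or> t \<mu> = 1" using t by (simp add: pm_vectors_def)
    then show ?thesis by auto
  qed
  then show ?thesis using True by simp
next
  case False
  then obtain \<mu> where m: "s \<mu> \<noteq> t \<mu>" by auto
  have "s \<mu> = - 1 \<or> s \<mu> = 1" "t \<mu> = - 1 \<or> t \<mu> = 1" using s t by (auto simp: pm_vectors_def)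
  then have "(1 + s \<mu> * t \<mu>) / 2 = 0" using m by auto
  then have "(\<Prod>\<mu>\<in>(UNIV::'m::finite set). (1 + s \<mu> * t \<mu>) / 2) = 0"
    by (intro prod_zero) auto
  then show ?thesis using False by simp
qed

lemma delta_sum:
  assumes t: "t \<in> (pm_vectors :: ('m::finite \<Rightarrow> real) set)"
  shows "(\<Sum>s\<in>pm_vectors. G s * (\<Prod>\<mu>\<in>(UNIV::'m set). (1 + s \<mu> * t \<mu>) / 2)) = G t"
proof -
  have "(\<Sum>s\<in>pm_vectors. G s * (\<Prod>\<mu>\<in>(UNIV::'m set). (1 + s \<mu> * t \<mu>) / 2)) = (\<Sum>s\<in>pm_vectors. if s = t then G s else 0)"
    by (intro sum.cong refl) (simp add: prod_ind t)
  also have "\<dots> = G t" using t by (simp add: sum.delta[OF finite_pm])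
  finally show ?thesis .
qed

lemma col_pm: "S \<in> multi_configs N \<Longrightarrow> i < N \<Longrightarrow> (\<lambda>\<mu>. S \<mu> i) \<in> pm_vectors"
  by (auto simp: multi_configs_def spin_configs_def pm_vectors_def)

lemma emp_eq:
  assumes N: "N > 0" and S: "S \<in> multi_configs N"
  shows "(1 / real N) * (\<Sum>i<N. G (\<lambda>\<mu>. S \<mu> i)) = (\<Sum>s\<in>(pm_vectors :: ('m::finite \<Rightarrow> real) set). G s * ff N s S)"
proof -
  have "(\<Sum>i<N. G (\<lambda>\<mu>. S \<mu> i)) = (\<Sum>i<N. \<Sum>s\<in>pm_vectors. G s * (\<Prod>\<mu>\<in>(UNIV::'m set). (1 + s \<mu> * S \<mu> i) / 2))"
    by (intro sum.cong refl) (simp add: delta_sum col_pm[OF S])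
  also have "\<dots> = (\<Sum>s\<in>pm_vectors. G s * (\<Sum>i<N. \<Prod>\<mu>\<in>(UNIV::'m set). (1 + s \<mu> * S \<mu> i) / 2))"
    by (subst sum.swap) (simp add: sum_distrib_left)
  finally show ?thesis by (simp add: ff_def sum_distrib_left mult.left_commute)
qed

theorem lemma2:
  fixes \<beta> h :: real
    and \<epsilon> :: "'m::finite \<Rightarrow> real"
    and K :: "(real^'m) set"
    and F :: "real^'m \<Rightarrow> ('m \<Rightarrow> real) \<Rightarrow> real"
  assumes "\<beta> > 0"
    and "h \<noteq> 0 \<or> \<beta> \<le> 1"
    and "\<forall>\<mu>. \<epsilon> \<mu> \<in> {-1, 1}"
    and "compact K"
    and "\<exists>B. \<forall>p\<in>K. \<forall>s\<in>pm_vectors. \<bar>F p s\<bar> \<le> B"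
  shows "\<forall>e>0. (\<lambda>N. \<Sum>S\<in>{S\<in>multi_configs N.
              \<exists>p\<in>K. \<bar>(1 / real N) * (\<Sum>i<N. F p (\<lambda>\<mu>. S \<mu> i)) - avg_s \<beta> h \<epsilon> (F p)\<bar> > e}.
            cw_prob \<beta> (\<lambda>\<mu>. h * \<epsilon> \<mu>) N S) \<longlonglongrightarrow> 0"
proof (intro allI impI)
  fix e :: real assume e: "e > 0"
  obtain B where Bf: "\<forall>p\<in>K. \<forall>s\<in>pm_vectors. \<bar>F p s\<bar> \<le> B" using assms(5) by blast
  define B' where "B' = \<bar>B\<bar> + 1"
  have B'p: "B' > 0" by (simp add: B'_def add_pos_nonneg)
  have Bf': "\<bar>F p s\<bar> \<le> B'" if "p \<in> K" "s \<in> pm_vectors" for p s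
  proof -
    have "\<bar>F p s\<bar> \<le> B" using Bf that by blast
    then show ?thesis unfolding B'_def by linarith
  qed
  define cp where "cp = real (card (pm_vectors :: ('m \<Rightarrow> real) set))"
  have cpp: "cp > 0" using card_pm_pos unfolding cp_def by simp
  define \<delta> where "\<delta> = e / (B' * cp)"
  have dp: "\<delta> > 0" using e B'p cpp by (simp add: \<delta>_def)
  have dB: "cp * (B' * \<delta>) = e" using B'p cpp by (simp add: \<delta>_def)
  define hv where "hv = (\<lambda>\<mu>. h * \<epsilon> \<mu>)"
  have c: "\<forall>\<mu>. hv \<mu> \<noteq> 0 \<or> \<beta> \<le> 1"
  proof
    fix \<mu> have "\<epsilon> \<mu> = -1 \<or> \<epsilon> \<mu> = 1" using assms(3) by auto
    then have "\<epsilon> \<mu> \<noteq> 0" by auto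
    then show "hv \<mu> \<noteq> 0 \<or> \<beta> \<le> 1" using assms(2) by (auto simp: hv_def)
  qed
  define \<pi> where "\<pi> s = (\<Prod>\<mu>\<in>(UNIV::'m set). (1 + s \<mu> * m0 \<beta> (hv \<mu>)) / 2)" for s :: "'m \<Rightarrow> real"
  have avg: "avg_s \<beta> h \<epsilon> (F p) = (\<Sum>s\<in>pm_vectors. F p s * \<pi> s)" for p
    unfolding avg_s_def \<pi>_def hv_def by (simp add: mult.commute)
  define X where "X N S = (\<Sum>s\<in>(pm_vectors :: ('m \<Rightarrow> real) set). (1 / \<delta>^2) * (ff N s S - \<pi> s)^2)" for N S
  define bad where "bad N = {S\<in>multi_configs N. \<exists>p\<in>K. \<bar>(1 / real N) * (\<Sum>i<N. F p (\<lambda>\<mu>. S \<mu> i)) - avg_s \<beta> h \<epsilon> (F p)\<bar> > e}" for N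
  have key: "1 \<le> X N S" if N: "N > 0" and S: "S \<in> bad N" for N S
  proof -
    obtain p where p: "p \<in> K" and Sm: "S \<in> multi_configs N"
      and gt: "\<bar>(1 / real N) * (\<Sum>i<N. F p (\<lambda>\<mu>. S \<mu> i)) - avg_s \<beta> h \<epsilon> (F p)\<bar> > e"
      using S unfolding bad_def by blast
    have diff: "(1 / real N) * (\<Sum>i<N. F p (\<lambda>\<mu>. S \<mu> i)) - avg_s \<beta> h \<epsilon> (F p) = (\<Sum>s\<in>pm_vectors. F p s * (ff N s S - \<pi> s))"
      unfolding emp_eq[OF N Sm] avg by (simp add: sum_subtractf right_diff_distrib)
    have "\<exists>s\<in>pm_vectors. \<bar>ff N s S - \<pi> s\<bar> > \<delta>"
    proof (rule ccontr)
      assume "\<not> ?thesis"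
      then have sm: "\<bar>ff N s S - \<pi> s\<bar> \<le> \<delta>" if "s \<in> pm_vectors" for s using that by auto
      have "\<bar>\<Sum>s\<in>pm_vectors. F p s * (ff N s S - \<pi> s)\<bar> \<le> (\<Sum>s\<in>(pm_vectors :: ('m \<Rightarrow> real) set). \<bar>F p s * (ff N s S - \<pi> s)\<bar>)"
        by (rule sum_abs)
      also have "\<dots> \<le> (\<Sum>s\<in>(pm_vectors :: ('m \<Rightarrow> real) set). B' * \<delta>)"
      proof (rule sum_mono)
        fix s :: "'m \<Rightarrow> real" assume s: "s \<in> pm_vectors"
        show "\<bar>F p s * (ff N s S - \<pi> s)\<bar> \<le> B' * \<delta>"
          unfolding abs_mult using Bf'[OF p s] sm[OF s] by (intro mult_mono) auto
      qed
      also have "\<dots> = e" using dB by (simp add: cp_def)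
      finally show False using gt diff by simp
    qed
    then obtain s0 where s0: "s0 \<in> pm_vectors" "\<bar>ff N s0 S - \<pi> s0\<bar> > \<delta>" by blast
    have "\<delta>^2 < \<bar>ff N s0 S - \<pi> s0\<bar>^2" using s0(2) dp by (intro power_strict_mono) auto
    then have "\<delta>^2 < (ff N s0 S - \<pi> s0)^2" by simp
    then have "1 \<le> (1 / \<delta>^2) * (ff N s0 S - \<pi> s0)^2" using dp by (simp add: field_simps)
    also have "\<dots> \<le> X N S" unfolding X_def
      by (rule member_le_sum[OF s0(1)]) (auto intro: finite_pm)
    finally show ?thesis .
  qed
  have hv_eq: "(\<lambda>\<mu>. h * \<epsilon> \<mu>) = hv" by (simp add: hv_def)
  let ?P = "\<lambda>N. \<Sum>S\<in>bad N. cw_prob \<beta> hv N S"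
  let ?U = "\<lambda>N. \<Sum>s\<in>(pm_vectors :: ('m \<Rightarrow> real) set). (1 / \<delta>^2) * EM \<beta> hv N (\<lambda>S. (ff N s S - \<pi> s)^2)"
  have bnd: "?P N \<le> ?U N" if N: "N > 0" for N
  proof -
    have sub: "bad N \<subseteq> multi_configs N" by (auto simp: bad_def)
    have Xn: "X N S \<ge> 0" for S unfolding X_def by (intro sum_nonneg) auto
    have "?P N \<le> (\<Sum>S\<in>bad N. cw_prob \<beta> hv N S * X N S)"
    proof (rule sum_mono)
      fix S assume S: "S \<in> bad N"
      show "cw_prob \<beta> hv N S \<le> cw_prob \<beta> hv N S * X N S"
        using mult_left_mono[OF key[OF N S] cw_prob_nonneg[of \<beta> hv N S]] by simp
    qed
    also have "\<dots> \<le> (\<Sum>S\<in>multi_configs N. cw_prob \<beta> hv N S * X N S)"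
    proof (rule sum_mono2[OF finite_multi sub])
      fix b show "0 \<le> cw_prob \<beta> hv N b * X N b" using mult_nonneg_nonneg[OF cw_prob_nonneg Xn] .
    qed
    also have "\<dots> = EM \<beta> hv N (X N)" by (simp add: EM_def)
    also have "\<dots> = ?U N"
    proof -
      have "X N = (\<lambda>S. \<Sum>s\<in>(pm_vectors :: ('m \<Rightarrow> real) set). (1 / \<delta>^2) * (ff N s S - \<pi> s)^2)"
        by (simp add: X_def fun_eq_iff)
      then show ?thesis by (simp only: EM_sum[OF finite_pm] EM_cmult)
    qed
    finally show ?thesis .
  qed
  have Ulim: "?U \<longlonglongrightarrow> (\<Sum>s\<in>(pm_vectors :: ('m \<Rightarrow> real) set). (1 / \<delta>^2) * 0)"
  proof (intro tendsto_sum tendsto_mult tendsto_const)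
    fix s :: "'m \<Rightarrow> real" assume s: "s \<in> pm_vectors"
    show "(\<lambda>N. EM \<beta> hv N (\<lambda>S. (ff N s S - \<pi> s)^2)) \<longlonglongrightarrow> 0"
      unfolding \<pi>_def by (rule var_lim[OF assms(1) c s])
  qed
  have "?P \<longlonglongrightarrow> 0"
  proof (rule tendsto_sandwich[where f="\<lambda>_. 0" and h="?U"])
    show "\<forall>\<^sub>F N in sequentially. 0 \<le> ?P N" using cw_prob_nonneg by (intro always_eventually allI sum_nonneg) auto
    show "\<forall>\<^sub>F N in sequentially. ?P N \<le> ?U N"
      using eventually_gt_at_top[of "0::nat"] by eventually_elim (rule bnd)
    show "(\<lambda>N. 0) \<longlonglongrightarrow> (0::real)" by simp
    show "?U \<longlonglongrightarrow> 0" using Ulim by simp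
  qed
  then show "(\<lambda>N. \<Sum>S\<in>{S\<in>multi_configs N.
              \<exists>p\<in>K. \<bar>(1 / real N) * (\<Sum>i<N. F p (\<lambda>\<mu>. S \<mu> i)) - avg_s \<beta> h \<epsilon> (F p)\<bar> > e}.
            cw_prob \<beta> (\<lambda>\<mu>. h * \<epsilon> \<mu>) N S) \<longlonglongrightarrow> 0"
    unfolding hv_eq bad_def by simp
qed

end
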